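(* Let $\vec G$ be any orientation of the Coxeter diagram $s_1-\cdots-s_{n-1}$ of $S_n$, with up indices determined as described below. For each transposition $(m,M)$ with $1\le m<M\le n$, there is a unique join-irreducible $\gamma$ of the weak order on $S_n$ that is not contracted by $\Theta(\vec G)$ and whose associated left reflection is $(m,M)$. The subset associated to this $\gamma$ is $A=\{m\}\cup\{b\in(m,M): b \text{ up}\}\cup(M,n]$.
   Context: Weak order on $S_n$: $x\le y$ iff $I(x)\subseteq I(y)$, $I(x)=\{(x_j,x_i):i<j,x_i>x_j\}$. An element is join-irreducible if it covers exactly one element $\gamma_*$. Join-irreducibles of $S_n$ correspond bijectively to subsets $A\subseteq[n]$ with $M:=\max([n]\setminus A)>m:=\min A$: $\gamma$ lists the elements of $[n]\setminus A$ in increasing order followed by the elements of $A$ in increasing order (one-line notation); its associated left reflection is the transposition $(m,M)$ (equivalently $\gamma s\gamma^{-1}$ for its unique right descent $s$). A congruence $\Theta$ contracts $\gamma$ if $\gamma\equiv\gamma_*$. $\Theta(\vec G)$ is the smallest lattice congruence of the weak order with $t\equiv ts$ for each directed edge $s\to t$ of $\vec G$, where $s_i=(i,i+1)$. For $b\in[2,n-1]$, $b$ is up if $s_b\to s_{b-1}$ in $\vec G$ and down if $s_{b-1}\to s_b$. *)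

theory Defs
  imports Main "HOL-Combinatorics.Transposition"
begin

text \<open>Permutations of [n] = {1..n}, as functions nat => nat fixing everything outside {1..n};
  w i is the i-th entry of the one-line notation. Products are function composition.\<close>

definition perms :: "nat \<Rightarrow> (nat \<Rightarrow> nat) set" where
  "perms n = {w. bij_betw w {1..n} {1..n} \<and> (\<forall>i. i \<notin> {1..n} \<longrightarrow> w i = i)}"

definition inv_set :: "nat \<Rightarrow> (nat \<Rightarrow> nat) \<Rightarrow> (nat \<times> nat) set" where
  "inv_set n x = {(x j, x i) | i j. 1 \<le> i \<and> i < j \<and> j \<le> n \<and> x i > x j}"

definition weak_le :: "nat \<Rightarrow> (nat \<Rightarrow> nat) \<Rightarrow> (nat \<Rightarrow> nat) \<Rightarrow> bool" where
  "weak_le n x y \<longleftrightarrow> inv_set n x \<subseteq> inv_set n y"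

definition weak_less :: "nat \<Rightarrow> (nat \<Rightarrow> nat) \<Rightarrow> (nat \<Rightarrow> nat) \<Rightarrow> bool" where
  "weak_less n x y \<longleftrightarrow> weak_le n x y \<and> x \<noteq> y"

definition covers :: "nat \<Rightarrow> (nat \<Rightarrow> nat) \<Rightarrow> (nat \<Rightarrow> nat) \<Rightarrow> bool" where
  "covers n y x \<longleftrightarrow> x \<in> perms n \<and> y \<in> perms n \<and> weak_less n x y \<and>
     \<not> (\<exists>z \<in> perms n. weak_less n x z \<and> weak_less n z y)"

definition join_irreducible :: "nat \<Rightarrow> (nat \<Rightarrow> nat) \<Rightarrow> bool" where
  "join_irreducible n g \<longleftrightarrow> g \<in> perms n \<and> (\<exists>! x. covers n g x)"

definition lower_cover :: "nat \<Rightarrow> (nat \<Rightarrow> nat) \<Rightarrow> (nat \<Rightarrow> nat)" where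
  "lower_cover n g = (THE x. covers n g x)"

definition is_join :: "nat \<Rightarrow> (nat \<Rightarrow> nat) \<Rightarrow> (nat \<Rightarrow> nat) \<Rightarrow> (nat \<Rightarrow> nat) \<Rightarrow> bool" where
  "is_join n x y j \<longleftrightarrow> j \<in> perms n \<and> weak_le n x j \<and> weak_le n y j \<and>
     (\<forall>u \<in> perms n. weak_le n x u \<and> weak_le n y u \<longrightarrow> weak_le n j u)"

definition is_meet :: "nat \<Rightarrow> (nat \<Rightarrow> nat) \<Rightarrow> (nat \<Rightarrow> nat) \<Rightarrow> (nat \<Rightarrow> nat) \<Rightarrow> bool" where
  "is_meet n x y j \<longleftrightarrow> j \<in> perms n \<and> weak_le n j x \<and> weak_le n j y \<and>
     (\<forall>u \<in> perms n. weak_le n u x \<and> weak_le n u y \<longrightarrow> weak_le n u j)"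

definition lattice_congruence :: "nat \<Rightarrow> ((nat \<Rightarrow> nat) \<times> (nat \<Rightarrow> nat)) set \<Rightarrow> bool" where
  "lattice_congruence n \<Theta> \<longleftrightarrow> equiv (perms n) \<Theta> \<and>
     (\<forall>x y z j j'. (x, y) \<in> \<Theta> \<longrightarrow> z \<in> perms n \<longrightarrow> is_join n x z j \<longrightarrow> is_join n y z j'
        \<longrightarrow> (j, j') \<in> \<Theta>) \<and>
     (\<forall>x y z j j'. (x, y) \<in> \<Theta> \<longrightarrow> z \<in> perms n \<longrightarrow> is_meet n x z j \<longrightarrow> is_meet n y z j'
        \<longrightarrow> (j, j') \<in> \<Theta>)"

definition simple_transp :: "nat \<Rightarrow> (nat \<Rightarrow> nat)" where
  "simple_transp i = transpose i (Suc i)"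

text \<open>An orientation of the Coxeter diagram s_1 - ... - s_(n-1) is encoded by a predicate
  up on {2..n-1}: up b means the edge s_b -> s_(b-1), not up b means s_(b-1) -> s_b. \<close>
definition diagram_edges :: "nat \<Rightarrow> (nat \<Rightarrow> bool) \<Rightarrow> ((nat \<Rightarrow> nat) \<times> (nat \<Rightarrow> nat)) set" where
  "diagram_edges n up =
     {(simple_transp b, simple_transp (b - 1)) | b. 2 \<le> b \<and> b \<le> n - 1 \<and> up b} \<union>
     {(simple_transp (b - 1), simple_transp b) | b. 2 \<le> b \<and> b \<le> n - 1 \<and> \<not> up b}"

definition Theta_G :: "nat \<Rightarrow> (nat \<Rightarrow> bool) \<Rightarrow> ((nat \<Rightarrow> nat) \<times> (nat \<Rightarrow> nat)) set" where
  "Theta_G n up = \<Inter> {\<Theta>. lattice_congruence n \<Theta> \<and>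
       (\<forall>(s, t) \<in> diagram_edges n up. (t, t \<circ> s) \<in> \<Theta>)}"

definition contracts :: "nat \<Rightarrow> ((nat \<Rightarrow> nat) \<times> (nat \<Rightarrow> nat)) set \<Rightarrow> (nat \<Rightarrow> nat) \<Rightarrow> bool" where
  "contracts n \<Theta> g \<longleftrightarrow> (g, lower_cover n g) \<in> \<Theta>"

definition has_left_reflection :: "nat \<Rightarrow> (nat \<Rightarrow> nat) \<Rightarrow> (nat \<Rightarrow> nat) \<Rightarrow> bool" where
  "has_left_reflection n g t \<longleftrightarrow>
     (\<exists>i. 1 \<le> i \<and> i < n \<and> g i > g (Suc i) \<and> t = g \<circ> simple_transp i \<circ> inv g)"

definition gamma_of :: "nat \<Rightarrow> nat set \<Rightarrow> (nat \<Rightarrow> nat)" where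
  "gamma_of n A = (\<lambda>i. if i \<in> {1..n}
      then (sorted_list_of_set ({1..n} - A) @ sorted_list_of_set A) ! (i - 1) else i)"

end

theory Submission
  imports Defs "HOL-Combinatorics.Permutations"
begin

definition Tn :: "nat \<Rightarrow> (nat \<times> nat) set" where
  "Tn n = {(p,q). 1 \<le> p \<and> p < q \<and> q \<le> n}"

definition keyset :: "nat \<Rightarrow> (nat \<Rightarrow> 'a::linorder) \<Rightarrow> (nat \<times> nat) set" where
  "keyset n r = {(p,q). 1 \<le> p \<and> p < q \<and> q \<le> n \<and> r q < r p}"

definition closedP :: "(nat \<times> nat) set \<Rightarrow> bool" where
  "closedP S \<longleftrightarrow> (\<forall>p q r. (p,q) \<in> S \<longrightarrow> (q,r) \<in> S \<longrightarrow> (p,r) \<in> S)"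

definition coclosedP :: "(nat \<times> nat) set \<Rightarrow> bool" where
  "coclosedP S \<longleftrightarrow> (\<forall>p q r. (p,r) \<in> S \<longrightarrow> p < q \<longrightarrow> q < r \<longrightarrow> (p,q) \<in> S \<or> (q,r) \<in> S)"

definition biclosed :: "nat \<Rightarrow> (nat \<times> nat) set \<Rightarrow> bool" where
  "biclosed n S \<longleftrightarrow> S \<subseteq> Tn n \<and> closedP S \<and> coclosedP S"

lemma perms_iff: "w \<in> perms n \<longleftrightarrow> w permutes {1..n}"
proof
  assume "w \<in> perms n"
  then show "w permutes {1..n}" unfolding perms_def
    by (intro bij_imp_permutes) auto
next
  assume "w permutes {1..n}"
  then show "w \<in> perms n" unfolding perms_def
    using permutes_imp_bij permutes_not_in by fastforce
qed

lemma perm_in: "w \<in> perms n \<Longrightarrow> i \<in> {1..n} \<Longrightarrow> w i \<in> {1..n}"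
  by (metis perms_iff permutes_in_image)

lemma inv_set_keyset:
  assumes w: "w \<in> perms n"
  shows "inv_set n w = keyset n (inv w)"
proof -
  have P: "w permutes {1..n}" using w by (simp add: perms_iff)
  show ?thesis
  proof (rule set_eqI, clarify)
    fix p q
    show "((p,q) \<in> inv_set n w) = ((p,q) \<in> keyset n (inv w))"
    proof
      assume "(p,q) \<in> inv_set n w"
      then obtain i j where ij: "p = w j" "q = w i" "1 \<le> i" "i < j" "j \<le> n" "w i > w j"
        unfolding inv_set_def by blast
      have "inv w q = i" "inv w p = j" using ij P by (auto simp: permutes_inverses)
      moreover have "p \<in> {1..n}" "q \<in> {1..n}" using ij perm_in[OF w] by auto
      ultimately show "(p,q) \<in> keyset n (inv w)" using ij unfolding keyset_def by auto
    next
      assume "(p,q) \<in> keyset n (inv w)"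
      then have k: "1 \<le> p" "p < q" "q \<le> n" "inv w q < inv w p" unfolding keyset_def by auto
      have IP: "inv w permutes {1..n}" using P by (rule permutes_inv)
      have "q \<in> {1..n}" "p \<in> {1..n}" using k by auto
      then have "inv w q \<in> {1..n}" "inv w p \<in> {1..n}" using IP by (metis permutes_in_image)+
      moreover have "w (inv w q) = q" "w (inv w p) = p" using P by (auto simp: permutes_inverses)
      ultimately show "(p,q) \<in> inv_set n w" unfolding inv_set_def using k
        by (intro CollectI exI[of _ "inv w q"] exI[of _ "inv w p"]) auto
    qed
  qed
qed

lemma keyset_biclosed: "biclosed n (keyset n r)"
proof -
  have "keyset n r \<subseteq> Tn n" unfolding keyset_def Tn_def by auto
  moreover have "closedP (keyset n r)" unfolding closedP_def keyset_def by auto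
  moreover have "coclosedP (keyset n r)" unfolding coclosedP_def
  proof (intro allI impI)
    fix p q s assume a: "(p,s) \<in> keyset n r" "p < q" "q < s"
    then have b: "1 \<le> p" "s \<le> n" "r s < r p" unfolding keyset_def by auto
    show "(p,q) \<in> keyset n r \<or> (q,s) \<in> keyset n r"
    proof (cases "r q < r p")
      case True then show ?thesis using a b unfolding keyset_def by auto
    next
      case False then have "r s < r q" using b by (meson leI le_less_trans)
      then show ?thesis using a b unfolding keyset_def by auto
    qed
  qed
  ultimately show ?thesis unfolding biclosed_def by blast
qed

lemma inv_set_biclosed: "w \<in> perms n \<Longrightarrow> biclosed n (inv_set n w)"
  by (simp add: inv_set_keyset keyset_biclosed)


lemma perm_from_order:
  fixes R :: "nat \<Rightarrow> nat \<Rightarrow> bool"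
  assumes irr: "\<And>u. \<not> R u u"
    and tr: "\<And>u v x. u \<in> {1..n} \<Longrightarrow> v \<in> {1..n} \<Longrightarrow> x \<in> {1..n} \<Longrightarrow> R u v \<Longrightarrow> R v x \<Longrightarrow> R u x"
    and tot: "\<And>u v. u \<in> {1..n} \<Longrightarrow> v \<in> {1..n} \<Longrightarrow> u \<noteq> v \<Longrightarrow> R u v \<or> R v u"
  shows "\<exists>w \<in> perms n. inv_set n w = {(p,q). 1 \<le> p \<and> p < q \<and> q \<le> n \<and> R q p}"
proof -
  define pos where "pos v = (if v \<in> {1..n} then Suc (card {u \<in> {1..n}. R u v}) else v)" for v
  have mono: "pos u < pos v" if "u \<in> {1..n}" "v \<in> {1..n}" "R u v" for u v
  proof -
    have "{x \<in> {1..n}. R x u} \<subset> {x \<in> {1..n}. R x v}"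
      using that tr irr by blast
    then have "card {x \<in> {1..n}. R x u} < card {x \<in> {1..n}. R x v}"
      by (intro psubset_card_mono) auto
    then show ?thesis using that unfolding pos_def by simp
  qed
  have inj: "inj_on pos {1..n}"
  proof (rule inj_onI)
    fix u v assume "u \<in> {1..n}" "v \<in> {1..n}" "pos u = pos v"
    then show "u = v" using tot mono by (metis less_irrefl)
  qed
  have range: "pos v \<in> {1..n}" if "v \<in> {1..n}" for v
  proof -
    have "{u \<in> {1..n}. R u v} \<subseteq> {1..n} - {v}" using irr by auto
    then have "card {u \<in> {1..n}. R u v} \<le> card ({1..n} - {v})" by (intro card_mono) auto
    also have "\<dots> = n - 1" using that by simp
    finally show ?thesis using that unfolding pos_def by auto
  qed
  have P: "pos permutes {1..n}"
  proof (rule inj_imp_permutes[OF inj])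
    show "\<And>x. x \<in> {1..n} \<Longrightarrow> pos x \<in> {1..n}" by (rule range)
    show "\<And>i. i \<notin> {1..n} \<Longrightarrow> pos i = i" unfolding pos_def by auto
  qed simp
  define w where "w = inv pos"
  have W: "w permutes {1..n}" unfolding w_def using P by (rule permutes_inv)
  have iw: "inv w = pos" unfolding w_def using P by (rule permutes_inv_inv)
  have "inv_set n w = keyset n pos" using W iw by (simp add: inv_set_keyset perms_iff)
  also have "\<dots> = {(p,q). 1 \<le> p \<and> p < q \<and> q \<le> n \<and> R q p}"
  proof -
    have key: "pos q < pos p \<longleftrightarrow> R q p" if "p \<in> {1..n}" "q \<in> {1..n}" "p \<noteq> q" for p q
      using tot[OF that] mono that by (meson less_asym)
    show ?thesis unfolding keyset_def using key by auto
  qed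
  finally show ?thesis using W perms_iff by blast
qed

definition before :: "(nat \<times> nat) set \<Rightarrow> nat \<Rightarrow> nat \<Rightarrow> bool" where
  "before S u v \<longleftrightarrow> (u < v \<and> (u,v) \<notin> S) \<or> (v < u \<and> (v,u) \<in> S)"

lemma biclosed_realize:
  assumes "biclosed n S"
  shows "\<exists>w \<in> perms n. inv_set n w = S"
proof -
  have sub: "S \<subseteq> Tn n" and cl: "closedP S" and co: "coclosedP S"
    using assms unfolding biclosed_def by auto
  have "\<exists>w \<in> perms n. inv_set n w = {(p,q). 1 \<le> p \<and> p < q \<and> q \<le> n \<and> before S q p}"
  proof (rule perm_from_order)
    show "\<And>u. \<not> before S u u" unfolding before_def by auto
    show "\<And>u v. u \<noteq> v \<Longrightarrow> before S u v \<or> before S v u" unfolding before_def by auto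
    fix u v x assume "before S u v" "before S v x"
    then show "before S u x" using cl co unfolding before_def closedP_def coclosedP_def
      by (smt (verit) linorder_neqE_nat order.strict_trans)
  qed
  moreover have "{(p,q). 1 \<le> p \<and> p < q \<and> q \<le> n \<and> before S q p} = S"
    using sub unfolding before_def Tn_def by auto
  ultimately show ?thesis by simp
qed

lemma keyset_realize: "\<exists>w \<in> perms n. inv_set n w = keyset n r"
  using biclosed_realize keyset_biclosed by blast

lemma card_below:
  assumes P: "P permutes {1..n}" and v: "v \<in> {1..n}"
  shows "card {u \<in> {1..n}. P u < P v} = P v - 1"
proof -
  have Pv: "P v \<in> {1..n}" using P v by (metis permutes_in_image)
  have "P ` {u \<in> {1..n}. P u < P v} = {1..<P v}"
  proof
    show "P ` {u \<in> {1..n}. P u < P v} \<subseteq> {1..<P v}"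
      using P by (auto, metis atLeastAtMost_iff permutes_in_image)
    show "{1..<P v} \<subseteq> P ` {u \<in> {1..n}. P u < P v}"
    proof
      fix y assume y: "y \<in> {1..<P v}"
      then have "y \<in> {1..n}" using Pv by auto
      then have "inv P y \<in> {1..n}" "P (inv P y) = y"
        using P by (metis permutes_in_image permutes_inv, metis permutes_inverses(1))
      then show "y \<in> P ` {u \<in> {1..n}. P u < P v}" using y by (intro image_eqI[of _ _ "inv P y"]) auto
    qed
  qed
  moreover have "inj_on P {u \<in> {1..n}. P u < P v}" using P permutes_inj_on by blast
  ultimately have "card {u \<in> {1..n}. P u < P v} = card {1..<P v}" by (metis card_image)
  then show ?thesis by simp
qed

lemma inv_set_inj:
  assumes w: "w \<in> perms n" and w': "w' \<in> perms n" and eq: "inv_set n w = inv_set n w'"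
  shows "w = w'"
proof -
  have W: "w permutes {1..n}" and W': "w' permutes {1..n}" using w w' perms_iff by auto
  define P where "P = inv w"
  define P' where "P' = inv w'"
  have PP: "P permutes {1..n}" "P' permutes {1..n}" unfolding P_def P'_def using W W' permutes_inv by auto
  have K: "keyset n P = keyset n P'" using eq w w' by (simp add: inv_set_keyset P_def P'_def)
  have cmp: "P u < P v \<longleftrightarrow> P' u < P' v" if "u \<in> {1..n}" "v \<in> {1..n}" for u v
  proof (cases u v rule: linorder_cases)
    case less
    then have "(u,v) \<in> keyset n P \<longleftrightarrow> (u,v) \<in> keyset n P'" using K by simp
    then have "P v < P u \<longleftrightarrow> P' v < P' u" using that less unfolding keyset_def by auto
    moreover have "P u \<noteq> P v" "P' u \<noteq> P' v" using PP less that
      by (metis less_irrefl permutes_inj_on inj_on_def)+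
    ultimately show ?thesis by auto
  next
    case equal then show ?thesis by simp
  next
    case greater
    then have "(v,u) \<in> keyset n P \<longleftrightarrow> (v,u) \<in> keyset n P'" using K by simp
    then show ?thesis using that greater unfolding keyset_def by auto
  qed
  have "P v = P' v" for v
  proof (cases "v \<in> {1..n}")
    case True
    have "{u \<in> {1..n}. P u < P v} = {u \<in> {1..n}. P' u < P' v}" using cmp True by auto
    then have "P v - 1 = P' v - 1" using card_below[OF PP(1) True] card_below[OF PP(2) True] by simp
    moreover have "P v \<ge> 1" "P' v \<ge> 1" using PP True by (metis atLeastAtMost_iff permutes_in_image)+
    ultimately show ?thesis by simp
  next
    case False then show ?thesis using PP by (simp add: permutes_not_in)
  qed
  then have "P = P'" by auto
  then show ?thesis using W W' unfolding P_def P'_def by (metis permutes_inv_inv)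
qed


lemma transp_lt:
  assumes "x \<noteq> y"
  shows "transpose i (Suc i) x < transpose i (Suc i) y \<longleftrightarrow>
    (if {x,y} = {i, Suc i} then y < x else x < y)"
  using assms unfolding transpose_def by (auto simp: doubleton_eq_iff)

lemma swap_perm:
  assumes w: "w \<in> perms n" and i: "1 \<le> i" "i < n"
  shows "w \<circ> transpose i (Suc i) \<in> perms n"
proof -
  have "transpose i (Suc i) permutes {1..n}" using i by (intro permutes_swap_id) auto
  then show ?thesis using w by (simp add: perms_iff permutes_compose)
qed

lemma swap_inv_set_pair:
  assumes w: "w \<in> perms n" and i: "1 \<le> i" "i < n" and pq: "1 \<le> p" "p < q" "q \<le> n"
  shows "(p,q) \<in> inv_set n (w \<circ> transpose i (Suc i)) \<longleftrightarrow>
    (if {p,q} = {w i, w (Suc i)} then (p,q) \<notin> inv_set n w else (p,q) \<in> inv_set n w)"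
proof -
  have W: "w permutes {1..n}" using w perms_iff by auto
  define t where "t = transpose i (Suc i)"
  have T: "t permutes {1..n}" unfolding t_def using i by (intro permutes_swap_id) auto
  have w': "w \<circ> t \<in> perms n" using swap_perm[OF w i] t_def by simp
  have inv': "inv (w \<circ> t) = t \<circ> inv w"
    using W T by (simp add: o_inv_distrib permutes_bij t_def)
  define P where "P = inv w"
  have neq: "P p \<noteq> P q" using pq W unfolding P_def by (metis permutes_inv_eq less_irrefl)
  have Pwi: "P (w i) = i" "P (w (Suc i)) = Suc i" using W unfolding P_def by (auto simp: permutes_inverses)
  have eqv: "{P p, P q} = {i, Suc i} \<longleftrightarrow> {p,q} = {w i, w (Suc i)}"
  proof
    assume "{P p, P q} = {i, Suc i}"
    then have "{w (P p), w (P q)} = {w i, w (Suc i)}" by (metis image_insert image_empty)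
    then show "{p,q} = {w i, w (Suc i)}" using W unfolding P_def by (simp add: permutes_inverses)
  next
    assume "{p,q} = {w i, w (Suc i)}"
    then show "{P p, P q} = {i, Suc i}" using Pwi by (metis image_insert image_empty)
  qed
  have "(p,q) \<in> inv_set n (w \<circ> t) \<longleftrightarrow> t (P q) < t (P p)"
    using w' pq by (simp add: inv_set_keyset inv' keyset_def P_def)
  also have "\<dots> \<longleftrightarrow> (if {P q, P p} = {i, Suc i} then P p < P q else P q < P p)"
    unfolding t_def using neq by (intro transp_lt) auto
  also have "\<dots> \<longleftrightarrow> (if {p,q} = {w i, w (Suc i)} then \<not> P q < P p else P q < P p)"
    using eqv neq by (auto simp: insert_commute)
  also have "\<dots> \<longleftrightarrow> (if {p,q} = {w i, w (Suc i)} then (p,q) \<notin> inv_set n w else (p,q) \<in> inv_set n w)"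
    using w pq by (simp add: inv_set_keyset keyset_def P_def)
  finally show ?thesis unfolding t_def .
qed

lemma inv_set_sub: "w \<in> perms n \<Longrightarrow> inv_set n w \<subseteq> Tn n"
  using inv_set_biclosed biclosed_def by blast

lemma swap_inv_set:
  assumes w: "w \<in> perms n" and i: "1 \<le> i" "i < n"
  shows "inv_set n (w \<circ> transpose i (Suc i)) =
    (if w i < w (Suc i) then insert (w i, w (Suc i)) (inv_set n w)
     else inv_set n w - {(w (Suc i), w i)})"
proof -
  have w': "w \<circ> transpose i (Suc i) \<in> perms n" using swap_perm[OF w i] .
  have W: "w permutes {1..n}" using w perms_iff by auto
  have wi: "w i \<in> {1..n}" "w (Suc i) \<in> {1..n}" using w i perm_in by auto
  have wne: "w i \<noteq> w (Suc i)" using W by (metis permutes_inj injD n_not_Suc_n)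
  have winv: "w i < w (Suc i) \<Longrightarrow> (w i, w (Suc i)) \<notin> inv_set n w"
    "w (Suc i) < w i \<Longrightarrow> (w (Suc i), w i) \<in> inv_set n w"
    using W i wi by (auto simp: inv_set_keyset[OF w] keyset_def permutes_inverses)
  show ?thesis
  proof (rule set_eqI)
    fix x :: "nat \<times> nat"
    obtain p q where x: "x = (p,q)" by force
    show "x \<in> inv_set n (w \<circ> transpose i (Suc i)) \<longleftrightarrow> x \<in> (if w i < w (Suc i) then insert (w i, w (Suc i)) (inv_set n w)
     else inv_set n w - {(w (Suc i), w i)})"
    proof (cases "1 \<le> p \<and> p < q \<and> q \<le> n")
      case True
      then show ?thesis using swap_inv_set_pair[OF w i, of p q] x wne winv
        by (auto simp: doubleton_eq_iff)
    next
      case False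
      then have "(p,q) \<notin> inv_set n (w \<circ> transpose i (Suc i))" "(p,q) \<notin> inv_set n w"
        using inv_set_sub[OF w'] inv_set_sub[OF w] unfolding Tn_def by auto
      then show ?thesis using x False wi wne by auto
    qed
  qed
qed


lemma Tn_trans: "(p,q) \<in> Tn n \<Longrightarrow> (q,r) \<in> Tn n \<Longrightarrow> (p,r) \<in> Tn n"
  unfolding Tn_def by auto

lemma trans_Tn: "trans (Tn n)"
  unfolding trans_def using Tn_trans by blast

lemma trancl_Tn: "R \<subseteq> Tn n \<Longrightarrow> R\<^sup>+ \<subseteq> Tn n"
  by (metis trans_Tn trancl_id trancl_mono subsetI)

lemma closedP_trans: "closedP S \<longleftrightarrow> trans S"
  unfolding closedP_def trans_def by blast

lemma trancl_closed_sub: "closedP S \<Longrightarrow> R \<subseteq> S \<Longrightarrow> R\<^sup>+ \<subseteq> S"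
  by (metis closedP_trans trancl_id trancl_mono subsetI)

lemma biclosed_trancl:
  assumes X: "biclosed n X" and Z: "biclosed n Z"
  shows "biclosed n ((X \<union> Z)\<^sup>+)"
proof -
  let ?R = "X \<union> Z"
  have sub: "?R \<subseteq> Tn n" using X Z unfolding biclosed_def by auto
  have subT: "?R\<^sup>+ \<subseteq> Tn n" using trancl_Tn[OF sub] .
  have coR: "(p,q) \<in> ?R \<or> (q,r) \<in> ?R" if "(p,r) \<in> ?R" "p < q" "q < r" for p q r
    using that X Z unfolding biclosed_def coclosedP_def by blast
  have lt: "a < b" if "(a,b) \<in> ?R\<^sup>+" for a b using subT that unfolding Tn_def by auto
  have co: "\<forall>q. p < q \<longrightarrow> q < r \<longrightarrow> (p,q) \<in> ?R\<^sup>+ \<or> (q,r) \<in> ?R\<^sup>+" if "(p,r) \<in> ?R\<^sup>+" for p r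
    using that
  proof (induction r rule: trancl_induct)
    case (base y)
    then show ?case using coR by blast
  next
    case (step y z)
    show ?case
    proof (intro allI impI)
      fix q assume q: "p < q" "q < z"
      have yz: "y < z" using step(2) sub unfolding Tn_def by auto
      show "(p,q) \<in> ?R\<^sup>+ \<or> (q,z) \<in> ?R\<^sup>+"
      proof (cases q y rule: linorder_cases)
        case less
        then have "(p,q) \<in> ?R\<^sup>+ \<or> (q,y) \<in> ?R\<^sup>+" using step(3) q by blast
        then show ?thesis using step(2) by (meson trancl.trancl_into_trancl)
      next
        case equal then show ?thesis using step(1) by simp
      next
        case greater
        then have "(y,q) \<in> ?R \<or> (q,z) \<in> ?R" using coR[OF step(2)] q by blast
        then show ?thesis using step(1) by (meson r_into_trancl trancl.trancl_into_trancl)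
      qed
    qed
  qed
  have "closedP (?R\<^sup>+)" unfolding closedP_def by (meson trancl_trans)
  then show ?thesis unfolding biclosed_def coclosedP_def using subT co by blast
qed

lemma biclosed_compl:
  assumes "biclosed n X" shows "biclosed n (Tn n - X)"
proof -
  have cl: "closedP X" and co: "coclosedP X" and sub: "X \<subseteq> Tn n" using assms unfolding biclosed_def by auto
  have "closedP (Tn n - X)" unfolding closedP_def
  proof (intro allI impI)
    fix p q r assume a: "(p,q) \<in> Tn n - X" "(q,r) \<in> Tn n - X"
    then have "p < q" "q < r" unfolding Tn_def by auto
    then show "(p,r) \<in> Tn n - X" using a co Tn_trans unfolding coclosedP_def by blast
  qed
  moreover have "coclosedP (Tn n - X)" unfolding coclosedP_def
  proof (intro allI impI)
    fix p q r assume a: "(p,r) \<in> Tn n - X" "p < q" "q < r"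
    then have "(p,q) \<in> Tn n" "(q,r) \<in> Tn n" unfolding Tn_def by auto
    then show "(p,q) \<in> Tn n - X \<or> (q,r) \<in> Tn n - X" using a cl unfolding closedP_def by blast
  qed
  ultimately show ?thesis unfolding biclosed_def by blast
qed

lemma is_join_iff:
  assumes x: "x \<in> perms n" and z: "z \<in> perms n"
  shows "is_join n x z j \<longleftrightarrow> j \<in> perms n \<and> inv_set n j = (inv_set n x \<union> inv_set n z)\<^sup>+"
proof -
  let ?S = "(inv_set n x \<union> inv_set n z)\<^sup>+"
  obtain j0 where j0: "j0 \<in> perms n" "inv_set n j0 = ?S"
    using biclosed_realize[OF biclosed_trancl[OF inv_set_biclosed[OF x] inv_set_biclosed[OF z]]] by blast
  have ub: "?S \<subseteq> inv_set n u" if "u \<in> perms n" "inv_set n x \<subseteq> inv_set n u" "inv_set n z \<subseteq> inv_set n u" for u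
    using that inv_set_biclosed[OF that(1)] by (intro trancl_closed_sub) (auto simp: biclosed_def)
  show ?thesis
  proof
    assume J: "is_join n x z j"
    then have jp: "j \<in> perms n" and "?S \<subseteq> inv_set n j" using ub unfolding is_join_def weak_le_def by auto
    moreover have "inv_set n x \<subseteq> inv_set n j0" "inv_set n z \<subseteq> inv_set n j0" using j0(2) by auto
    moreover have "inv_set n j \<subseteq> inv_set n j0"
      using J j0(1) calculation(3,4) unfolding is_join_def weak_le_def by blast
    ultimately show "j \<in> perms n \<and> inv_set n j = ?S" using j0 by auto
  next
    assume "j \<in> perms n \<and> inv_set n j = ?S"
    then show "is_join n x z j" unfolding is_join_def weak_le_def using ub by auto
  qed
qed

lemma is_meet_iff:
  assumes x: "x \<in> perms n" and z: "z \<in> perms n"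
  shows "is_meet n x z j \<longleftrightarrow> j \<in> perms n \<and>
     inv_set n j = Tn n - ((Tn n - inv_set n x) \<union> (Tn n - inv_set n z))\<^sup>+"
proof -
  let ?S = "Tn n - ((Tn n - inv_set n x) \<union> (Tn n - inv_set n z))\<^sup>+"
  have bx: "biclosed n (Tn n - inv_set n x)" "biclosed n (Tn n - inv_set n z)"
    using biclosed_compl inv_set_biclosed x z by auto
  obtain j0 where j0: "j0 \<in> perms n" "inv_set n j0 = ?S"
    using biclosed_realize[OF biclosed_compl[OF biclosed_trancl[OF bx]]] by blast
  have subx: "inv_set n x \<subseteq> Tn n" "inv_set n z \<subseteq> Tn n" using inv_set_sub x z by auto
  have lbx: "?S \<subseteq> inv_set n x" "?S \<subseteq> inv_set n z" using subx by auto
  have lb: "inv_set n u \<subseteq> ?S" if "u \<in> perms n" "inv_set n u \<subseteq> inv_set n x" "inv_set n u \<subseteq> inv_set n z" for u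
  proof -
    have bu: "biclosed n (Tn n - inv_set n u)" using biclosed_compl inv_set_biclosed that(1) by auto
    have "((Tn n - inv_set n x) \<union> (Tn n - inv_set n z))\<^sup>+ \<subseteq> Tn n - inv_set n u"
      using that bu by (intro trancl_closed_sub) (auto simp: biclosed_def)
    then show ?thesis using inv_set_sub[OF that(1)] by auto
  qed
  show ?thesis
  proof
    assume J: "is_meet n x z j"
    then have jp: "j \<in> perms n" and "inv_set n j \<subseteq> ?S" using lb unfolding is_meet_def weak_le_def by auto
    moreover have "inv_set n j0 \<subseteq> inv_set n j" using J j0 lbx unfolding is_meet_def weak_le_def by blast
    ultimately show "j \<in> perms n \<and> inv_set n j = ?S" using j0 by auto
  next
    assume "j \<in> perms n \<and> inv_set n j = ?S"
    then show "is_meet n x z j" unfolding is_meet_def weak_le_def using lb lbx by auto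
  qed
qed

lemma join_exists:
  assumes x: "x \<in> perms n" and z: "z \<in> perms n" shows "\<exists>j. is_join n x z j"
proof -
  obtain j0 where "j0 \<in> perms n" "inv_set n j0 = (inv_set n x \<union> inv_set n z)\<^sup>+"
    using biclosed_realize[OF biclosed_trancl[OF inv_set_biclosed[OF x] inv_set_biclosed[OF z]]] by blast
  then show ?thesis using is_join_iff[OF x z] by blast
qed

lemma meet_exists:
  assumes x: "x \<in> perms n" and z: "z \<in> perms n" shows "\<exists>j. is_meet n x z j"
proof -
  have bx: "biclosed n (Tn n - inv_set n x)" "biclosed n (Tn n - inv_set n z)"
    using biclosed_compl inv_set_biclosed x z by auto
  obtain j0 where "j0 \<in> perms n" "inv_set n j0 = Tn n - ((Tn n - inv_set n x) \<union> (Tn n - inv_set n z))\<^sup>+"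
    using biclosed_realize[OF biclosed_compl[OF biclosed_trancl[OF bx]]] by blast
  then show ?thesis using is_meet_iff[OF x z] by blast
qed

lemma join_le:
  assumes "x \<in> perms n" "z \<in> perms n" "inv_set n x \<subseteq> inv_set n z"
  shows "is_join n x z z" "is_join n z x z"
  using assms unfolding is_join_def weak_le_def by auto

lemma meet_le:
  assumes "x \<in> perms n" "z \<in> perms n" "inv_set n x \<subseteq> inv_set n z"
  shows "is_meet n x z x" "is_meet n z x x"
  using assms unfolding is_meet_def weak_le_def by auto


lemma inv_set_mem:
  assumes w: "w \<in> perms n"
  shows "(p,q) \<in> inv_set n w \<longleftrightarrow> 1 \<le> p \<and> p < q \<and> q \<le> n \<and> inv w q < inv w p"
  using inv_set_keyset[OF w] unfolding keyset_def by auto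

lemma cover_step:
  assumes s: "s \<in> perms n" and t: "t \<in> perms n" and sub: "inv_set n s \<subseteq> inv_set n t"
    and pq: "(p,q) \<in> inv_set n t - inv_set n s"
  shows "\<exists>i. 1 \<le> i \<and> i < n \<and> s i < s (Suc i) \<and> (s i, s (Suc i)) \<in> inv_set n t"
proof -
  have S: "s permutes {1..n}" using s perms_iff by auto
  define P where "P = inv s"
  have PS: "P permutes {1..n}" unfolding P_def using S permutes_inv by auto
  have bt: "biclosed n (inv_set n t)" using inv_set_biclosed[OF t] .
  have Pin: "P x \<in> {1..n}" if "x \<in> {1..n}" for x using PS that by (metis permutes_in_image)
  have sP: "s (P x) = x" for x using S unfolding P_def by (simp add: permutes_inverses)
  have Ps: "P (s x) = x" for x using S unfolding P_def by (simp add: permutes_inverses)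
  have Pinj: "P x = P y \<Longrightarrow> x = y" for x y using sP by metis
  have tin: "x \<in> {1..n}" "y \<in> {1..n}" "x < y" if "(x,y) \<in> inv_set n t" for x y
    using that inv_set_sub[OF t] unfolding Tn_def by auto
  have notin_s: "(x,y) \<notin> inv_set n s \<longleftrightarrow> P x < P y" if "x \<in> {1..n}" "y \<in> {1..n}" "x < y" for x y
  proof -
    have "P x \<noteq> P y" using that Pinj by auto
    then show ?thesis using that inv_set_mem[OF s] unfolding P_def by auto
  qed
  have main: "\<forall>p q. (p,q) \<in> inv_set n t \<longrightarrow> P p < P q \<longrightarrow> P q - P p = k \<longrightarrow>
     (\<exists>i. 1 \<le> i \<and> i < n \<and> s i < s (Suc i) \<and> (s i, s (Suc i)) \<in> inv_set n t)" for k
  proof (induction k rule: less_induct)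
    case (less k)
    show ?case
    proof (intro allI impI)
      fix p q assume pqt: "(p,q) \<in> inv_set n t" and lt: "P p < P q" and kk: "P q - P p = k"
      note pq' = tin[OF pqt]
      have Pp: "P p \<in> {1..n}" "P q \<in> {1..n}" using Pin pq' by auto
      show "\<exists>i. 1 \<le> i \<and> i < n \<and> s i < s (Suc i) \<and> (s i, s (Suc i)) \<in> inv_set n t"
      proof (cases "P q = Suc (P p)")
        case True
        have "s (P p) = p" "s (Suc (P p)) = q" using sP True by metis+
        moreover have "1 \<le> P p" "P p < n" using Pp True by auto
        ultimately show ?thesis using pqt pq' by (intro exI[of _ "P p"]) auto
      next
        case False
        define i where "i = Suc (P p)"
        have i: "i \<in> {1..n}" "P p < i" "i < P q" using False lt Pp unfolding i_def by auto
        define r where "r = s i"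
        have r: "r \<in> {1..n}" "P r = i" using i S unfolding r_def by (metis permutes_in_image, simp add: Ps)
        have rp: "r \<noteq> p" "r \<noteq> q" using r i by auto
        show ?thesis
        proof (cases "p < r \<and> r < q")
          case True
          then have "(p,r) \<in> inv_set n t \<or> (r,q) \<in> inv_set n t"
            using bt pqt unfolding biclosed_def coclosedP_def by blast
          then show ?thesis
          proof
            assume "(p,r) \<in> inv_set n t"
            then show ?thesis using less.IH[of "P r - P p"] r i kk lt by auto
          next
            assume "(r,q) \<in> inv_set n t"
            then show ?thesis using less.IH[of "P q - P r"] r i kk lt by auto
          qed
        next
          case False
          then have "r < p \<or> q < r" using rp pq' by auto
          then show ?thesis
          proof
            assume rp': "r < p"
            have "(r,p) \<in> inv_set n s" using notin_s[of r p] r pq' i rp' by auto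
            then have "(r,p) \<in> inv_set n t" using sub by auto
            then have "(r,q) \<in> inv_set n t" using pqt bt unfolding biclosed_def closedP_def by blast
            then show ?thesis using less.IH[of "P q - P r"] r i kk lt by auto
          next
            assume qr: "q < r"
            have "(q,r) \<in> inv_set n s" using notin_s[of q r] r pq' i qr by auto
            then have "(q,r) \<in> inv_set n t" using sub by auto
            then have "(p,r) \<in> inv_set n t" using pqt bt unfolding biclosed_def closedP_def by blast
            then show ?thesis using less.IH[of "P r - P p"] r i kk lt by auto
          qed
        qed
      qed
    qed
  qed
  have "P p < P q" using pq notin_s tin by blast
  then show ?thesis using main pq by blast
qed

lemma finite_Tn: "finite (Tn n)"
proof -
  have "Tn n \<subseteq> {1..n} \<times> {1..n}" unfolding Tn_def by auto
  then show ?thesis by (rule finite_subset) auto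
qed

definition bad :: "(nat \<Rightarrow> bool) \<Rightarrow> (nat \<times> nat) set \<Rightarrow> nat \<Rightarrow> nat \<Rightarrow> bool" where
  "bad up S p q \<longleftrightarrow> (\<exists>d. p < d \<and> d < q \<and> ((up d \<and> (p,d) \<in> S) \<or> (\<not> up d \<and> (d,q) \<in> S)))"

definition Fset :: "(nat \<Rightarrow> bool) \<Rightarrow> (nat \<times> nat) set \<Rightarrow> (nat \<times> nat) set" where
  "Fset up S = {(p,q) \<in> S. \<not> bad up S p q}"

definition Eedge :: "nat \<Rightarrow> (nat \<Rightarrow> bool) \<Rightarrow> ((nat \<Rightarrow> nat) \<times> (nat \<Rightarrow> nat)) set" where
  "Eedge n up = {(u,v). u \<in> perms n \<and> v \<in> perms n \<and> (\<exists>p q. (p,q) \<notin> inv_set n u \<and>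
      inv_set n v = insert (p,q) (inv_set n u) \<and> bad up (inv_set n v) p q)}"

definition Wit :: "(nat \<Rightarrow> bool) \<Rightarrow> (nat \<times> nat) set \<Rightarrow> (nat \<times> nat) set \<Rightarrow> nat \<Rightarrow> nat \<Rightarrow> bool" where
  "Wit up S T p q \<longleftrightarrow> (\<exists>d. p < d \<and> d < q \<and>
     ((up d \<and> ((p,d) \<in> S \<or> (d,q) \<notin> T)) \<or> (\<not> up d \<and> ((d,q) \<in> S \<or> (p,d) \<notin> T))))"

lemma chain_lemma:
  assumes "s \<in> perms n" "t \<in> perms n" "inv_set n s \<subseteq> inv_set n t"
    "\<forall>(p,q) \<in> inv_set n t - inv_set n s. Wit up (inv_set n s) (inv_set n t) p q"
  shows "(s,t) \<in> (Eedge n up)\<^sup>*"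
  using assms
proof (induction "card (inv_set n t - inv_set n s)" arbitrary: s rule: less_induct)
  case less
  note s = less.prems(1) and t = less.prems(2) and sub = less.prems(3) and W = less.prems(4)
  show ?case
  proof (cases "inv_set n t - inv_set n s = {}")
    case True
    then have "inv_set n s = inv_set n t" using sub by auto
    then have "s = t" using inv_set_inj s t by blast
    then show ?thesis by simp
  next
    case False
    then obtain p q where pq: "(p,q) \<in> inv_set n t - inv_set n s" by auto
    obtain i where i: "1 \<le> i" "i < n" "s i < s (Suc i)" "(s i, s (Suc i)) \<in> inv_set n t"
      using cover_step[OF s t sub pq] by blast
    define s' where "s' = s \<circ> transpose i (Suc i)"
    have s': "s' \<in> perms n" unfolding s'_def using swap_perm[OF s i(1,2)] .
    have Is': "inv_set n s' = insert (s i, s (Suc i)) (inv_set n s)"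
      unfolding s'_def using swap_inv_set[OF s i(1,2)] i(3) by simp
    have notin: "(s i, s (Suc i)) \<notin> inv_set n s"
    proof -
      have "s permutes {1..n}" using s perms_iff by auto
      then have "inv s (s i) = i" "inv s (s (Suc i)) = Suc i" by (simp_all add: permutes_inverses)
      then show ?thesis using inv_set_mem[OF s] by simp
    qed
    have sub': "inv_set n s' \<subseteq> inv_set n t" using Is' sub i(4) by auto
    have bs': "biclosed n (inv_set n s')" using inv_set_biclosed[OF s'] .
    have edge: "(s, s') \<in> Eedge n up"
    proof -
      obtain d where d: "s i < d" "d < s (Suc i)"
        "(up d \<and> ((s i,d) \<in> inv_set n s \<or> (d, s (Suc i)) \<notin> inv_set n t)) \<or>
         (\<not> up d \<and> ((d, s (Suc i)) \<in> inv_set n s \<or> (s i, d) \<notin> inv_set n t))"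
        using W i(4) notin unfolding Wit_def by blast
      have inS': "(s i, s (Suc i)) \<in> inv_set n s'" using Is' by auto
      have co: "(s i, d) \<in> inv_set n s' \<or> (d, s (Suc i)) \<in> inv_set n s'"
        using bs' inS' d(1,2) unfolding biclosed_def coclosedP_def by blast
      have "bad up (inv_set n s') (s i) (s (Suc i))"
        unfolding bad_def using d co Is' sub' by blast
      then show ?thesis unfolding Eedge_def using s s' Is' notin by blast
    qed
    have "(s', t) \<in> (Eedge n up)\<^sup>*"
    proof (rule less.hyps)
      show "card (inv_set n t - inv_set n s') < card (inv_set n t - inv_set n s)"
      proof (rule psubset_card_mono)
        show "finite (inv_set n t - inv_set n s)"
          using inv_set_sub[OF t] finite_Tn by (meson finite_Diff finite_subset)
        show "inv_set n t - inv_set n s' \<subset> inv_set n t - inv_set n s" using Is' notin i(4) by auto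
      qed
      show "\<forall>(p,q) \<in> inv_set n t - inv_set n s'. Wit up (inv_set n s') (inv_set n t) p q"
        using W Is' unfolding Wit_def by blast
    qed (use s' t sub' in auto)
    then show ?thesis using edge by (meson converse_rtrancl_into_rtrancl)
  qed
qed


lemma Fset_edge:
  assumes e: "(u,v) \<in> Eedge n up"
  shows "Fset up (inv_set n u) = Fset up (inv_set n v)"
proof -
  obtain a c where u: "u \<in> perms n" and v: "v \<in> perms n" and ac: "(a,c) \<notin> inv_set n u"
    and V: "inv_set n v = insert (a,c) (inv_set n u)" and bV: "bad up (inv_set n v) a c"
    using e unfolding Eedge_def by blast
  define U where "U = inv_set n u"
  have bu: "biclosed n U" unfolding U_def using inv_set_biclosed[OF u] .
  have cl: "\<And>x y z. (x,y) \<in> U \<Longrightarrow> (y,z) \<in> U \<Longrightarrow> (x,z) \<in> U"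
    and co: "\<And>x y z. (x,z) \<in> U \<Longrightarrow> x < y \<Longrightarrow> y < z \<Longrightarrow> (x,y) \<in> U \<or> (y,z) \<in> U"
    using bu unfolding biclosed_def closedP_def coclosedP_def by blast+
  have acU: "(a,c) \<notin> U" using ac U_def by simp
  obtain d0 where d0: "a < d0" "d0 < c" "(up d0 \<and> (a,d0) \<in> U) \<or> (\<not> up d0 \<and> (d0,c) \<in> U)"
    using bV V unfolding bad_def U_def by auto
  have badeq: "bad up (insert (a,c) U) p q \<Longrightarrow> bad up U p q" if pq: "(p,q) \<in> U" for p q
  proof -
    assume "bad up (insert (a,c) U) p q"
    then obtain d where d: "p < d" "d < q"
      "(up d \<and> (p,d) \<in> insert (a,c) U) \<or> (\<not> up d \<and> (d,q) \<in> insert (a,c) U)"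
      unfolding bad_def by blast
    show "bad up U p q"
    proof (cases "(up d \<and> (p,d) \<in> U) \<or> (\<not> up d \<and> (d,q) \<in> U)")
      case True then show ?thesis using d unfolding bad_def by blast
    next
      case False
      then have "(up d \<and> p = a \<and> d = c) \<or> (\<not> up d \<and> d = a \<and> q = c)" using d by auto
      then show ?thesis
      proof
        assume h: "up d \<and> p = a \<and> d = c"
        have "(a,q) \<in> U" "a < c" "c < q" using pq h d by auto
        then have cq: "(c,q) \<in> U" using co acU by blast
        show ?thesis unfolding bad_def
          using d0 h d cl[of d0 c q] cq by (intro exI[of _ d0]) auto
      next
        assume h: "\<not> up d \<and> d = a \<and> q = c"
        have "(p,c) \<in> U" "p < a" "a < c" using pq h d by auto
        then have pa: "(p,a) \<in> U" using co acU by blast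
        show ?thesis unfolding bad_def
          using d0 h d cl[of p a d0] pa by (intro exI[of _ d0]) auto
      qed
    qed
  qed
  have "Fset up U = Fset up (insert (a,c) U)"
  proof (rule set_eqI)
    fix x :: "nat \<times> nat"
    obtain p q where x: "x = (p,q)" by force
    show "x \<in> Fset up U \<longleftrightarrow> x \<in> Fset up (insert (a,c) U)"
    proof (cases "(p,q) = (a,c)")
      case True then show ?thesis using x acU bV V U_def unfolding Fset_def by auto
    next
      case False
      have "bad up U p q \<Longrightarrow> bad up (insert (a,c) U) p q" unfolding bad_def by blast
      then show ?thesis using x False badeq unfolding Fset_def by auto
    qed
  qed
  then show ?thesis using V U_def by simp
qed

lemma rtrancl_le: "(x,y) \<in> R\<^sup>* \<Longrightarrow> R \<subseteq> Tn n \<Longrightarrow> x \<le> y"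
proof (induction rule: rtrancl_induct)
  case base then show ?case by simp
next
  case (step y z) then show ?case unfolding Tn_def by fastforce
qed

lemma join_edge:
  assumes e: "(u,v) \<in> Eedge n up" and z: "z \<in> perms n"
    and ju: "is_join n u z j1" and jv: "is_join n v z j2"
  shows "(j1, j2) \<in> (Eedge n up)\<^sup>*"
proof -
  obtain a c where u: "u \<in> perms n" and v: "v \<in> perms n" and ac: "(a,c) \<notin> inv_set n u"
    and V: "inv_set n v = insert (a,c) (inv_set n u)" and bV: "bad up (inv_set n v) a c"
    using e unfolding Eedge_def by blast
  define R where "R = inv_set n u \<union> inv_set n z"
  have RT: "R \<subseteq> Tn n" unfolding R_def using inv_set_sub u z by auto
  have J1: "j1 \<in> perms n" "inv_set n j1 = R\<^sup>+" using ju is_join_iff[OF u z] R_def by auto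
  have J2: "j2 \<in> perms n" "inv_set n j2 = (insert (a,c) R)\<^sup>+" using jv is_join_iff[OF v z] V R_def by auto
  have J2': "inv_set n j2 = R\<^sup>+ \<union> {(x,y). (x,a) \<in> R\<^sup>* \<and> (c,y) \<in> R\<^sup>*}"
    using J2(2) by (simp add: trancl_insert)
  show ?thesis
  proof (rule chain_lemma[OF J1(1) J2(1)])
    show "inv_set n j1 \<subseteq> inv_set n j2" using J1 J2' by auto
    show "\<forall>(p,q) \<in> inv_set n j2 - inv_set n j1. Wit up (inv_set n j1) (inv_set n j2) p q"
    proof (clarify)
      fix p q assume pq: "(p,q) \<in> inv_set n j2" "(p,q) \<notin> inv_set n j1"
      then have pa: "(p,a) \<in> R\<^sup>*" and cq: "(c,q) \<in> R\<^sup>*" using J1 J2' by auto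
      have le: "p \<le> a" "c \<le> q" using rtrancl_le[OF pa RT] rtrancl_le[OF cq RT] .
      obtain d where d: "a < d" "d < c" "(up d \<and> (a,d) \<in> inv_set n v) \<or> (\<not> up d \<and> (d,c) \<in> inv_set n v)"
        using bV unfolding bad_def by blast
      show "Wit up (inv_set n j1) (inv_set n j2) p q"
      proof (cases "up d")
        case True
        then have "(a,d) \<in> R" using d V R_def by auto
        then have "(p,d) \<in> R\<^sup>+" using pa by (meson rtrancl_into_trancl1)
        then show ?thesis unfolding Wit_def using True d le J1 by (intro exI[of _ d]) auto
      next
        case False
        then have "(d,c) \<in> R" using d V R_def by auto
        then have "(d,q) \<in> R\<^sup>+" using cq by (meson rtrancl_into_trancl2)
        then show ?thesis unfolding Wit_def using False d le J1 by (intro exI[of _ d]) auto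
      qed
    qed
  qed
qed

lemma meet_edge:
  assumes e: "(u,v) \<in> Eedge n up" and z: "z \<in> perms n"
    and mu: "is_meet n u z j1" and mv: "is_meet n v z j2"
  shows "(j1, j2) \<in> (Eedge n up)\<^sup>*"
proof -
  obtain a c where u: "u \<in> perms n" and v: "v \<in> perms n" and ac: "(a,c) \<notin> inv_set n u"
    and V: "inv_set n v = insert (a,c) (inv_set n u)" and bV: "bad up (inv_set n v) a c"
    using e unfolding Eedge_def by blast
  define U where "U = inv_set n u"
  have bu: "biclosed n U" unfolding U_def using inv_set_biclosed[OF u] .
  have cl: "\<And>x y z. (x,y) \<in> U \<Longrightarrow> (y,z) \<in> U \<Longrightarrow> (x,z) \<in> U"
    using bu unfolding biclosed_def closedP_def by blast
  have acT: "(a,c) \<in> Tn n" using inv_set_sub[OF v] V by auto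
  define R where "R = (Tn n - inv_set n v) \<union> (Tn n - inv_set n z)"
  have RT: "R \<subseteq> Tn n" unfolding R_def by auto
  have Uc: "(Tn n - inv_set n u) \<union> (Tn n - inv_set n z) = insert (a,c) R"
    unfolding R_def using V acT ac by auto
  have J1: "j1 \<in> perms n" "inv_set n j1 = Tn n - (insert (a,c) R)\<^sup>+"
    using mu is_meet_iff[OF u z] Uc by auto
  have J2: "j2 \<in> perms n" "inv_set n j2 = Tn n - R\<^sup>+" using mv is_meet_iff[OF v z] R_def by auto
  have J1': "inv_set n j1 = Tn n - (R\<^sup>+ \<union> {(x,y). (x,a) \<in> R\<^sup>* \<and> (c,y) \<in> R\<^sup>*})"
    using J1(2) by (simp add: trancl_insert)
  obtain d where d: "a < d" "d < c" "(up d \<and> (a,d) \<in> inv_set n v) \<or> (\<not> up d \<and> (d,c) \<in> inv_set n v)"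
    using bV unfolding bad_def by blast
  have dT: "(a,d) \<in> Tn n" "(d,c) \<in> Tn n" using acT d unfolding Tn_def by auto
  show ?thesis
  proof (rule chain_lemma[OF J1(1) J2(1)])
    show "inv_set n j1 \<subseteq> inv_set n j2" using J1' J2 by auto
    show "\<forall>(p,q) \<in> inv_set n j2 - inv_set n j1. Wit up (inv_set n j1) (inv_set n j2) p q"
    proof (clarify)
      fix p q assume pq: "(p,q) \<in> inv_set n j2" "(p,q) \<notin> inv_set n j1"
      then have pa: "(p,a) \<in> R\<^sup>*" and cq: "(c,q) \<in> R\<^sup>*" using J1' J2 by auto
      have le: "p \<le> a" "c \<le> q" using rtrancl_le[OF pa RT] rtrancl_le[OF cq RT] .
      show "Wit up (inv_set n j1) (inv_set n j2) p q"
      proof (cases "up d")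
        case True
        then have adU: "(a,d) \<in> U" using d V U_def by auto
        then have "(d,c) \<notin> U" using cl ac U_def by blast
        then have "(d,c) \<in> R" unfolding R_def using V U_def dT d by auto
        then have "(d,q) \<in> R\<^sup>+" using cq by (meson rtrancl_into_trancl2)
        then show ?thesis unfolding Wit_def using True d le J2 by (intro exI[of _ d]) auto
      next
        case False
        then have dcU: "(d,c) \<in> U" using d V U_def by auto
        then have "(a,d) \<notin> U" using cl ac U_def by blast
        then have "(a,d) \<in> R" unfolding R_def using V U_def dT d by auto
        then have "(p,d) \<in> R\<^sup>+" using pa by (meson rtrancl_into_trancl1)
        then show ?thesis unfolding Wit_def using False d le J2 by (intro exI[of _ d]) auto
      qed
    qed
  qed
qed


definition ThetaC :: "nat \<Rightarrow> (nat \<Rightarrow> bool) \<Rightarrow> ((nat \<Rightarrow> nat) \<times> (nat \<Rightarrow> nat)) set" where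
  "ThetaC n up = {(x,y). x \<in> perms n \<and> y \<in> perms n \<and> (x,y) \<in> (Eedge n up \<union> (Eedge n up)\<inverse>)\<^sup>*}"

lemma Eedge_perms: "(x,y) \<in> Eedge n up \<Longrightarrow> x \<in> perms n \<and> y \<in> perms n"
  unfolding Eedge_def by auto

lemma Estar_ThetaC:
  assumes "(x,y) \<in> (Eedge n up)\<^sup>*" "x \<in> perms n"
  shows "(x,y) \<in> ThetaC n up"
proof -
  have "y \<in> perms n" using assms
    by (induction rule: rtrancl_induct) (auto dest: Eedge_perms)
  moreover have "(x,y) \<in> (Eedge n up \<union> (Eedge n up)\<inverse>)\<^sup>*"
    using assms(1) by (rule rtrancl_mono[THEN subsetD, rotated]) auto
  ultimately show ?thesis using assms unfolding ThetaC_def by auto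
qed

lemma ThetaC_refl: "x \<in> perms n \<Longrightarrow> (x,x) \<in> ThetaC n up"
  unfolding ThetaC_def by auto

lemma ThetaC_sym: "(x,y) \<in> ThetaC n up \<Longrightarrow> (y,x) \<in> ThetaC n up"
proof -
  let ?G = "Eedge n up \<union> (Eedge n up)\<inverse>"
  assume a: "(x,y) \<in> ThetaC n up"
  then have "(x,y) \<in> ?G\<^sup>*" unfolding ThetaC_def by auto
  then have "(y,x) \<in> (?G\<inverse>)\<^sup>*" by (simp add: rtrancl_converse)
  moreover have "?G\<inverse> = ?G" by auto
  ultimately show ?thesis using a unfolding ThetaC_def by auto
qed

lemma ThetaC_trans: "(x,y) \<in> ThetaC n up \<Longrightarrow> (y,z) \<in> ThetaC n up \<Longrightarrow> (x,z) \<in> ThetaC n up"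
  unfolding ThetaC_def by (auto intro: rtrancl_trans)

lemma ThetaC_equiv: "equiv (perms n) (ThetaC n up)"
proof (rule equivI)
  show "refl_on (perms n) (ThetaC n up)"
    by (rule refl_onI) (auto simp: ThetaC_def)
  show "ThetaC n up \<subseteq> perms n \<times> perms n" by (auto simp: ThetaC_def)
  show "sym (ThetaC n up)" by (rule symI) (rule ThetaC_sym)
  show "trans (ThetaC n up)" by (rule transI) (rule ThetaC_trans)
qed

lemma ThetaC_join:
  assumes xy: "(x,y) \<in> ThetaC n up" and z: "z \<in> perms n"
    and j: "is_join n x z j" and j': "is_join n y z j'"
  shows "(j,j') \<in> ThetaC n up"
proof -
  let ?G = "Eedge n up \<union> (Eedge n up)\<inverse>"
  have x: "x \<in> perms n" and G: "(x,y) \<in> ?G\<^sup>*" using xy unfolding ThetaC_def by auto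
  have jp: "j \<in> perms n" using j unfolding is_join_def by auto
  have "\<forall>j'. is_join n y z j' \<longrightarrow> (j,j') \<in> ThetaC n up" using G
  proof (induction rule: rtrancl_induct)
    case base
    show ?case
    proof (intro allI impI)
      fix j' assume "is_join n x z j'"
      then have "j' = j" using j is_join_iff[OF x z] inv_set_inj by metis
      then show "(j,j') \<in> ThetaC n up" using jp ThetaC_refl by auto
    qed
  next
    case (step y y')
    have yp: "y \<in> perms n" "y' \<in> perms n" using step(2) by (auto dest: Eedge_perms)
    obtain jy where jy: "is_join n y z jy" using join_exists[OF yp(1) z] by blast
    have jyp: "jy \<in> perms n" using jy unfolding is_join_def by auto
    have 1: "(j,jy) \<in> ThetaC n up" using step(3) jy by blast
    show ?case
    proof (intro allI impI)
      fix j' assume j': "is_join n y' z j'"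
      have j'p: "j' \<in> perms n" using j' unfolding is_join_def by auto
      have "(jy, j') \<in> ThetaC n up"
      proof (cases "(y,y') \<in> Eedge n up")
        case True
        then show ?thesis using join_edge[OF True z jy j'] Estar_ThetaC jyp by blast
      next
        case False
        then have "(y',y) \<in> Eedge n up" using step(2) by auto
        then show ?thesis using join_edge[OF _ z j' jy] Estar_ThetaC j'p ThetaC_sym by blast
      qed
      then show "(j,j') \<in> ThetaC n up" using 1 ThetaC_trans by blast
    qed
  qed
  then show ?thesis using j' by blast
qed

lemma ThetaC_meet:
  assumes xy: "(x,y) \<in> ThetaC n up" and z: "z \<in> perms n"
    and j: "is_meet n x z j" and j': "is_meet n y z j'"
  shows "(j,j') \<in> ThetaC n up"
proof -
  let ?G = "Eedge n up \<union> (Eedge n up)\<inverse>"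
  have x: "x \<in> perms n" and G: "(x,y) \<in> ?G\<^sup>*" using xy unfolding ThetaC_def by auto
  have jp: "j \<in> perms n" using j unfolding is_meet_def by auto
  have "\<forall>j'. is_meet n y z j' \<longrightarrow> (j,j') \<in> ThetaC n up" using G
  proof (induction rule: rtrancl_induct)
    case base
    show ?case
    proof (intro allI impI)
      fix j' assume "is_meet n x z j'"
      then have "j' = j" using j is_meet_iff[OF x z] inv_set_inj by metis
      then show "(j,j') \<in> ThetaC n up" using jp ThetaC_refl by auto
    qed
  next
    case (step y y')
    have yp: "y \<in> perms n" "y' \<in> perms n" using step(2) by (auto dest: Eedge_perms)
    obtain jy where jy: "is_meet n y z jy" using meet_exists[OF yp(1) z] by blast
    have jyp: "jy \<in> perms n" using jy unfolding is_meet_def by auto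
    have 1: "(j,jy) \<in> ThetaC n up" using step(3) jy by blast
    show ?case
    proof (intro allI impI)
      fix j' assume j': "is_meet n y' z j'"
      have j'p: "j' \<in> perms n" using j' unfolding is_meet_def by auto
      have "(jy, j') \<in> ThetaC n up"
      proof (cases "(y,y') \<in> Eedge n up")
        case True
        then show ?thesis using meet_edge[OF True z jy j'] Estar_ThetaC jyp by blast
      next
        case False
        then have "(y',y) \<in> Eedge n up" using step(2) by auto
        then show ?thesis using meet_edge[OF _ z j' jy] Estar_ThetaC j'p ThetaC_sym by blast
      qed
      then show "(j,j') \<in> ThetaC n up" using 1 ThetaC_trans by blast
    qed
  qed
  then show ?thesis using j' by blast
qed

lemma ThetaC_congruence: "lattice_congruence n (ThetaC n up)"
  unfolding lattice_congruence_def using ThetaC_equiv ThetaC_join ThetaC_meet by blast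

lemma ThetaC_Fset:
  assumes "(x,y) \<in> ThetaC n up"
  shows "Fset up (inv_set n x) = Fset up (inv_set n y)"
proof -
  have "(x,y) \<in> (Eedge n up \<union> (Eedge n up)\<inverse>)\<^sup>*" using assms unfolding ThetaC_def by auto
  then show ?thesis
  proof (induction rule: rtrancl_induct)
    case base then show ?case by simp
  next
    case (step y z) then show ?case using Fset_edge by blast
  qed
qed

lemma id_perm: "id \<in> perms n"
  by (simp add: perms_iff)

lemma inv_set_id: "inv_set n id = {}"
  unfolding inv_set_def by auto

lemma simple_transp_perm: "1 \<le> i \<Longrightarrow> i < n \<Longrightarrow> simple_transp i \<in> perms n"
  unfolding simple_transp_def using swap_perm[OF id_perm] by (metis comp_id id_comp)

lemma inv_set_simple: "1 \<le> i \<Longrightarrow> i < n \<Longrightarrow> inv_set n (simple_transp i) = {(i, Suc i)}"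
  unfolding simple_transp_def using swap_inv_set[OF id_perm, of i n] by (simp add: inv_set_id)

lemma generators_ThetaC:
  assumes "(s,t) \<in> diagram_edges n up"
  shows "(t, t \<circ> s) \<in> ThetaC n up"
proof -
  obtain b where b: "2 \<le> b" "b \<le> n - 1" and
    st: "(up b \<and> s = simple_transp b \<and> t = simple_transp (b - 1)) \<or>
         (\<not> up b \<and> s = simple_transp (b - 1) \<and> t = simple_transp b)"
    using assms unfolding diagram_edges_def by blast
  have sb: "Suc (b - 1) = b" using b by auto
  show ?thesis
  proof (cases "up b")
    case True
    then have s: "s = transpose b (Suc b)" and t: "t = simple_transp (b - 1)"
      using st unfolding simple_transp_def by auto
    have tp: "t \<in> perms n" using t b simple_transp_perm by auto
    have It: "inv_set n t = {(b - 1, b)}" using t b inv_set_simple[of "b - 1" n] sb by auto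
    have tv: "t b = b - 1" "t (Suc b) = Suc b" unfolding t simple_transp_def using sb
      by (auto simp: transpose_def)
    have Its: "inv_set n (t \<circ> s) = insert (b - 1, Suc b) (inv_set n t)"
      using swap_inv_set[OF tp, of b] b tv s by auto
    have tsp: "t \<circ> s \<in> perms n" using swap_perm[OF tp, of b] b s by auto
    have "bad up (inv_set n (t \<circ> s)) (b - 1) (Suc b)"
      unfolding bad_def using Its It True b by (intro exI[of _ b]) auto
    moreover have "(b - 1, Suc b) \<notin> inv_set n t" using It by auto
    ultimately have "(t, t \<circ> s) \<in> Eedge n up"
      unfolding Eedge_def using tp tsp Its by blast
    then show ?thesis using Estar_ThetaC tp by blast
  next
    case False
    then have s: "s = transpose (b - 1) (Suc (b - 1))" and t: "t = simple_transp b"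
      using st unfolding simple_transp_def by auto
    have tp: "t \<in> perms n" using t b simple_transp_perm by auto
    have It: "inv_set n t = {(b, Suc b)}" using t b inv_set_simple[of b n] by auto
    have tv: "t (b - 1) = b - 1" "t (Suc (b - 1)) = Suc b" unfolding t simple_transp_def using sb b
      by (auto simp: transpose_def)
    have Its: "inv_set n (t \<circ> s) = insert (b - 1, Suc b) (inv_set n t)"
      using swap_inv_set[OF tp, of "b - 1"] b tv s by auto
    have tsp: "t \<circ> s \<in> perms n" using swap_perm[OF tp, of "b - 1"] b s by auto
    have "bad up (inv_set n (t \<circ> s)) (b - 1) (Suc b)"
      unfolding bad_def using Its It False b by (intro exI[of _ b]) auto
    moreover have "(b - 1, Suc b) \<notin> inv_set n t" using It b by auto
    ultimately have "(t, t \<circ> s) \<in> Eedge n up"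
      unfolding Eedge_def using tp tsp Its by blast
    then show ?thesis using Estar_ThetaC tp by blast
  qed
qed

lemma Theta_G_sub_ThetaC: "Theta_G n up \<subseteq> ThetaC n up"
proof -
  have "ThetaC n up \<in> {\<Theta>. lattice_congruence n \<Theta> \<and>
       (\<forall>(s, t) \<in> diagram_edges n up. (t, t \<circ> s) \<in> \<Theta>)}"
    using ThetaC_congruence generators_ThetaC by blast
  then show ?thesis unfolding Theta_G_def by blast
qed


definition hk :: "nat \<Rightarrow> nat \<Rightarrow> nat \<Rightarrow> (nat \<Rightarrow> bool) \<Rightarrow> nat \<Rightarrow> nat \<Rightarrow> nat \<Rightarrow> nat \<Rightarrow> nat" where
  "hk a b c L ka kb kc d = (if d = a then ka else if d = b then kb else if d = c then kc
      else if L d then 0 else 4)"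

lemma hk_other: "d \<noteq> a \<Longrightarrow> d \<noteq> b \<Longrightarrow> d \<noteq> c \<Longrightarrow> hk a b c L ka kb kc d = (if L d then 0 else 4)"
  unfolding hk_def by simp

lemma hk_abc: "hk a b c L ka kb kc a = ka" "b \<noteq> a \<Longrightarrow> hk a b c L ka kb kc b = kb"
  "c \<noteq> a \<Longrightarrow> c \<noteq> b \<Longrightarrow> hk a b c L ka kb kc c = kc"
  unfolding hk_def by simp_all

lemma hk_same:
  assumes "\<not> (p \<in> {a,b,c} \<and> q \<in> {a,b,c})" "a < b" "b < c"
    "ka \<in> {1,2,3}" "kb \<in> {1,2,3}" "kc \<in> {1,2,3}" "ka' \<in> {1,2,3}" "kb' \<in> {1,2,3}" "kc' \<in> {1,2,3}"
  shows "hk a b c L ka kb kc q < hk a b c L ka kb kc p \<longleftrightarrow> hk a b c L ka' kb' kc' q < hk a b c L ka' kb' kc' p"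
proof -
  have A: "hk a b c L ka kb kc x \<in> {1,2,3} \<and> hk a b c L ka' kb' kc' x \<in> {1,2,3}" if "x \<in> {a,b,c}" for x
    using that assms unfolding hk_def by auto
  have B: "hk a b c L ka kb kc x = hk a b c L ka' kb' kc' x \<and> hk a b c L ka kb kc x \<in> {0,4}" if "x \<notin> {a,b,c}" for x
    using that unfolding hk_def by auto
  show ?thesis
  proof (cases "p \<in> {a,b,c}")
    case True
    then have "q \<notin> {a,b,c}" using assms by auto
    then show ?thesis using A[OF True] B[of q] by auto
  next
    case False
    show ?thesis
    proof (cases "q \<in> {a,b,c}")
      case True then show ?thesis using A[OF True] B[OF False] by auto
    next
      case F2: False then show ?thesis using B[OF False] B[OF F2] by auto
    qed
  qed
qed

definition HB :: "nat \<Rightarrow> nat \<Rightarrow> nat \<Rightarrow> nat \<Rightarrow> (nat \<Rightarrow> bool) \<Rightarrow> (nat \<times> nat) set" where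
  "HB n a b c L = {(p,q) \<in> keyset n (hk a b c L 1 2 3). \<not> (p \<in> {a,b,c} \<and> q \<in> {a,b,c})}"

lemma hk_keyset:
  assumes abc: "1 \<le> a" "a < b" "b < c" "c \<le> n"
    and k: "ka \<in> {1,2,3}" "kb \<in> {1,2,3}" "kc \<in> {1,2,3}"
  shows "keyset n (hk a b c L ka kb kc) = HB n a b c L \<union>
    ((if kb < ka then {(a,b)} else {}) \<union> (if kc < ka then {(a,c)} else {}) \<union> (if kc < kb then {(b,c)} else {}))"
proof (rule set_eqI)
  fix e :: "nat \<times> nat"
  obtain p q where e: "e = (p,q)" by force
  show "e \<in> keyset n (hk a b c L ka kb kc) \<longleftrightarrow> e \<in> HB n a b c L \<union>
    ((if kb < ka then {(a,b)} else {}) \<union> (if kc < ka then {(a,c)} else {}) \<union> (if kc < kb then {(b,c)} else {}))"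
  proof (cases "p \<in> {a,b,c} \<and> q \<in> {a,b,c}")
    case True
    have hv: "hk a b c L ka kb kc a = ka" "hk a b c L ka kb kc b = kb" "hk a b c L ka kb kc c = kc"
      using abc unfolding hk_def by auto
    show ?thesis
    proof (cases "p < q")
      case True
      then have "(p,q) = (a,b) \<or> (p,q) = (a,c) \<or> (p,q) = (b,c)" using \<open>p \<in> {a,b,c} \<and> q \<in> {a,b,c}\<close> abc by auto
      then show ?thesis using e abc hv unfolding keyset_def HB_def by auto
    next
      case False
      then show ?thesis using e abc unfolding keyset_def HB_def by auto
    qed
  next
    case False
    have "hk a b c L ka kb kc q < hk a b c L ka kb kc p \<longleftrightarrow> hk a b c L 1 2 3 q < hk a b c L 1 2 3 p"
      using hk_same[OF False abc(2,3) k] by auto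
    then show ?thesis using e False unfolding keyset_def HB_def by auto
  qed
qed

lemma hk_facts:
  fixes L :: "nat \<Rightarrow> bool"
  assumes abc: "1 \<le> a" "a < b" "b < c" "c \<le> n"
  defines "K ka kb kc \<equiv> keyset n (hk a b c L ka kb kc)"
  shows "K 2 1 3 = insert (a,b) (K 1 2 3)" "(a,b) \<notin> K 1 2 3"
    and "K 1 3 2 = insert (b,c) (K 1 2 3)" "(b,c) \<notin> K 1 2 3"
    and "K 2 3 1 = insert (a,c) (K 1 3 2)" "(a,c) \<notin> K 1 3 2"
    and "K 3 1 2 = insert (a,c) (K 2 1 3)" "(a,c) \<notin> K 2 1 3"
    and "K 3 2 1 = insert (a,b) (K 2 3 1)" "(a,b) \<notin> K 2 3 1"
    and "K 3 2 1 = insert (b,c) (K 3 1 2)" "(b,c) \<notin> K 3 1 2"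
    and "K 3 2 1 = K 1 2 3 \<union> {(a,b),(b,c),(a,c)}"
    and "K 2 3 1 \<inter> K 3 1 2 \<subseteq> insert (a,c) (K 1 2 3)"
proof -
  have nb: "(a,b) \<notin> HB n a b c L" "(a,c) \<notin> HB n a b c L" "(b,c) \<notin> HB n a b c L"
    unfolding HB_def by auto
  have ne: "(a,b) \<noteq> (a,c)" "(a,b) \<noteq> (b,c)" "(a,c) \<noteq> (b,c)" using abc by auto
  note kk = hk_keyset[OF abc, of _ _ _ L]
  have k: "K 1 2 3 = HB n a b c L" "K 2 1 3 = HB n a b c L \<union> {(a,b)}"
    "K 1 3 2 = HB n a b c L \<union> {(b,c)}" "K 2 3 1 = HB n a b c L \<union> {(a,c),(b,c)}"
    "K 3 1 2 = HB n a b c L \<union> {(a,b),(a,c)}" "K 3 2 1 = HB n a b c L \<union> {(a,b),(a,c),(b,c)}"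
    unfolding K_def by (simp_all add: kk) blast+
  show "K 2 1 3 = insert (a,b) (K 1 2 3)" "(a,b) \<notin> K 1 2 3"
    and "K 1 3 2 = insert (b,c) (K 1 2 3)" "(b,c) \<notin> K 1 2 3"
    and "K 2 3 1 = insert (a,c) (K 1 3 2)" "(a,c) \<notin> K 1 3 2"
    and "K 3 1 2 = insert (a,c) (K 2 1 3)" "(a,c) \<notin> K 2 1 3"
    and "K 3 2 1 = insert (a,b) (K 2 3 1)" "(a,b) \<notin> K 2 3 1"
    and "K 3 2 1 = insert (b,c) (K 3 1 2)" "(b,c) \<notin> K 3 1 2"
    and "K 3 2 1 = K 1 2 3 \<union> {(a,b),(b,c),(a,c)}"
    and "K 2 3 1 \<inter> K 3 1 2 \<subseteq> insert (a,c) (K 1 2 3)"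
    unfolding k using nb ne by auto
qed

lemma cong_join: "lattice_congruence n \<Theta> \<Longrightarrow> (x,y) \<in> \<Theta> \<Longrightarrow> z \<in> perms n \<Longrightarrow>
   is_join n x z j \<Longrightarrow> is_join n y z j' \<Longrightarrow> (j,j') \<in> \<Theta>"
  unfolding lattice_congruence_def by blast

lemma cong_meet: "lattice_congruence n \<Theta> \<Longrightarrow> (x,y) \<in> \<Theta> \<Longrightarrow> z \<in> perms n \<Longrightarrow>
   is_meet n x z j \<Longrightarrow> is_meet n y z j' \<Longrightarrow> (j,j') \<in> \<Theta>"
  unfolding lattice_congruence_def by blast

lemma cong_sym: "lattice_congruence n \<Theta> \<Longrightarrow> (x,y) \<in> \<Theta> \<Longrightarrow> (y,x) \<in> \<Theta>"
  unfolding lattice_congruence_def equiv_def by (meson symD)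

lemma realize_key: "\<exists>w \<in> perms n. inv_set n w = keyset n r"
  by (rule keyset_realize)

lemma hexagon_force:
  assumes cong: "lattice_congruence n \<Theta>" and abc: "1 \<le> a" "a < b" "b < c" "c \<le> n"
  shows "(\<exists>u v. u \<in> perms n \<and> v \<in> perms n \<and> inv_set n u = keyset n (hk a b c L 1 2 3) \<and>
            inv_set n v = keyset n (hk a b c L 2 1 3) \<and> (u,v) \<in> \<Theta>) \<Longrightarrow>
         (\<exists>u v. u \<in> perms n \<and> v \<in> perms n \<and> inv_set n u = keyset n (hk a b c L 1 3 2) \<and>
            inv_set n v = keyset n (hk a b c L 2 3 1) \<and> (u,v) \<in> \<Theta>)"
    and "(\<exists>u v. u \<in> perms n \<and> v \<in> perms n \<and> inv_set n u = keyset n (hk a b c L 2 3 1) \<and>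
            inv_set n v = keyset n (hk a b c L 3 2 1) \<and> (u,v) \<in> \<Theta>) \<Longrightarrow>
         (\<exists>u v. u \<in> perms n \<and> v \<in> perms n \<and> inv_set n u = keyset n (hk a b c L 2 1 3) \<and>
            inv_set n v = keyset n (hk a b c L 3 1 2) \<and> (u,v) \<in> \<Theta>)"
    and "(\<exists>u v. u \<in> perms n \<and> v \<in> perms n \<and> inv_set n u = keyset n (hk a b c L 1 2 3) \<and>
            inv_set n v = keyset n (hk a b c L 1 3 2) \<and> (u,v) \<in> \<Theta>) \<Longrightarrow>
         (\<exists>u v. u \<in> perms n \<and> v \<in> perms n \<and> inv_set n u = keyset n (hk a b c L 2 1 3) \<and>
            inv_set n v = keyset n (hk a b c L 3 1 2) \<and> (u,v) \<in> \<Theta>)"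
    and "(\<exists>u v. u \<in> perms n \<and> v \<in> perms n \<and> inv_set n u = keyset n (hk a b c L 3 1 2) \<and>
            inv_set n v = keyset n (hk a b c L 3 2 1) \<and> (u,v) \<in> \<Theta>) \<Longrightarrow>
         (\<exists>u v. u \<in> perms n \<and> v \<in> perms n \<and> inv_set n u = keyset n (hk a b c L 1 3 2) \<and>
            inv_set n v = keyset n (hk a b c L 2 3 1) \<and> (u,v) \<in> \<Theta>)"
proof -
  let ?K = "\<lambda>ka kb kc. keyset n (hk a b c L ka kb kc)"
  note H = hk_facts[OF abc, of L]
  have uniq: "w = w'" if "w \<in> perms n" "w' \<in> perms n" "inv_set n w = inv_set n w'" for w w'
    using inv_set_inj that by blast
  obtain x where x: "x \<in> perms n" "inv_set n x = ?K 1 2 3" using realize_key by blast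
  obtain bac where bac: "bac \<in> perms n" "inv_set n bac = ?K 2 1 3" using realize_key by blast
  obtain acb where acb: "acb \<in> perms n" "inv_set n acb = ?K 1 3 2" using realize_key by blast
  obtain cab where cab: "cab \<in> perms n" "inv_set n cab = ?K 2 3 1" using realize_key by blast
  obtain bca where bca: "bca \<in> perms n" "inv_set n bca = ?K 3 1 2" using realize_key by blast
  obtain top where top: "top \<in> perms n" "inv_set n top = ?K 3 2 1" using realize_key by blast
  have cl: "(p,r) \<in> inv_set n w" if "w \<in> perms n" "(p,q) \<in> inv_set n w" "(q,r) \<in> inv_set n w" for w p q r
    using inv_set_biclosed[OF that(1)] that unfolding biclosed_def closedP_def by blast
  have co: "(p,q) \<in> inv_set n w \<or> (q,r) \<in> inv_set n w"
    if "w \<in> perms n" "(p,r) \<in> inv_set n w" "p < q" "q < r" for w p q r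
    using inv_set_biclosed[OF that(1)] that unfolding biclosed_def coclosedP_def by blast
  have topsub: "inv_set n top \<subseteq> inv_set n u" if u: "u \<in> perms n" "inv_set n bac \<subseteq> inv_set n u"
      "inv_set n acb \<subseteq> inv_set n u" for u
  proof -
    have ab: "(a,b) \<in> inv_set n u" using u(2) bac(2) H(1) by auto
    have bc: "(b,c) \<in> inv_set n u" using u(3) acb(2) H(3) by auto
    have ac: "(a,c) \<in> inv_set n u" using cl[OF u(1) ab bc] .
    have "?K 1 2 3 \<subseteq> inv_set n u" using u(2) bac(2) H(1) by auto
    then show ?thesis using top(2) H(13) ab bc ac by auto
  qed
  have botsub: "inv_set n bac \<subseteq> inv_set n top" "inv_set n acb \<subseteq> inv_set n top"
    using bac(2) acb(2) top(2) H(1,3,13) by auto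
  have join_top: "is_join n bac acb top" "is_join n acb bac top"
    unfolding is_join_def weak_le_def using top(1) botsub topsub by blast+
  have le: "inv_set n x \<subseteq> inv_set n bac" "inv_set n x \<subseteq> inv_set n acb"
    "inv_set n acb \<subseteq> inv_set n cab" "inv_set n bac \<subseteq> inv_set n bca"
    "inv_set n cab \<subseteq> inv_set n top" "inv_set n bca \<subseteq> inv_set n top"
    by (simp_all only: x(2) bac(2) acb(2) cab(2) bca(2) top(2) H(1) H(3) H(5) H(7) H(9) H(11)) blast+
  have meet_x: "is_meet n cab bca x" "is_meet n bca cab x"
  proof -
    have "inv_set n w \<subseteq> inv_set n x" if w: "w \<in> perms n" "inv_set n w \<subseteq> inv_set n cab"
      "inv_set n w \<subseteq> inv_set n bca" for w
    proof
      fix e assume e: "e \<in> inv_set n w"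
      then have "e \<in> ?K 2 3 1 \<inter> ?K 3 1 2" using w cab(2) bca(2) by blast
      then have "e \<in> insert (a,c) (inv_set n x)" using H(14) x(2) by blast
      moreover have "e \<noteq> (a,c)"
      proof
        assume "e = (a,c)"
        then have "(a,b) \<in> inv_set n w \<or> (b,c) \<in> inv_set n w" using co[OF w(1)] e abc by blast
        moreover have "(a,b) \<notin> inv_set n w" using w(2) cab(2) H(10) by blast
        moreover have "(b,c) \<notin> inv_set n w" using w(3) bca(2) H(12) by blast
        ultimately show False by blast
      qed
      ultimately show "e \<in> inv_set n x" by blast
    qed
    moreover have "inv_set n x \<subseteq> inv_set n cab" "inv_set n x \<subseteq> inv_set n bca"
      using le by blast+
    ultimately show "is_meet n cab bca x" "is_meet n bca cab x"
      unfolding is_meet_def weak_le_def using x(1) by blast+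
  qed
  show "(\<exists>u v. u \<in> perms n \<and> v \<in> perms n \<and> inv_set n u = ?K 1 2 3 \<and>
            inv_set n v = ?K 2 1 3 \<and> (u,v) \<in> \<Theta>) \<Longrightarrow>
         (\<exists>u v. u \<in> perms n \<and> v \<in> perms n \<and> inv_set n u = ?K 1 3 2 \<and>
            inv_set n v = ?K 2 3 1 \<and> (u,v) \<in> \<Theta>)"
  proof -
    assume "\<exists>u v. u \<in> perms n \<and> v \<in> perms n \<and> inv_set n u = ?K 1 2 3 \<and>
            inv_set n v = ?K 2 1 3 \<and> (u,v) \<in> \<Theta>"
    then have 0: "(x, bac) \<in> \<Theta>" using uniq x bac by metis
    have 1: "(acb, top) \<in> \<Theta>" using cong_join[OF cong 0 acb(1) join_le(1)[OF x(1) acb(1) le(2)] join_top(1)] .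
    have 2: "(acb, cab) \<in> \<Theta>"
      using cong_meet[OF cong 1 cab(1) meet_le(1)[OF acb(1) cab(1) le(3)] meet_le(2)[OF cab(1) top(1) le(5)]] .
    then show ?thesis using acb cab by blast
  qed
  show "(\<exists>u v. u \<in> perms n \<and> v \<in> perms n \<and> inv_set n u = ?K 2 3 1 \<and>
            inv_set n v = ?K 3 2 1 \<and> (u,v) \<in> \<Theta>) \<Longrightarrow>
         (\<exists>u v. u \<in> perms n \<and> v \<in> perms n \<and> inv_set n u = ?K 2 1 3 \<and>
            inv_set n v = ?K 3 1 2 \<and> (u,v) \<in> \<Theta>)"
  proof -
    assume "\<exists>u v. u \<in> perms n \<and> v \<in> perms n \<and> inv_set n u = ?K 2 3 1 \<and>
            inv_set n v = ?K 3 2 1 \<and> (u,v) \<in> \<Theta>"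
    then have 0: "(cab, top) \<in> \<Theta>" using uniq cab top by metis
    have 1: "(x, bca) \<in> \<Theta>" using cong_meet[OF cong 0 bca(1) meet_x(1) meet_le(2)[OF bca(1) top(1) le(6)]] .
    have 2: "(bac, bca) \<in> \<Theta>"
      using cong_join[OF cong 1 bac(1) join_le(1)[OF x(1) bac(1) le(1)] join_le(2)[OF bac(1) bca(1) le(4)]] .
    then show ?thesis using bac bca by blast
  qed
  show "(\<exists>u v. u \<in> perms n \<and> v \<in> perms n \<and> inv_set n u = ?K 1 2 3 \<and>
            inv_set n v = ?K 1 3 2 \<and> (u,v) \<in> \<Theta>) \<Longrightarrow>
         (\<exists>u v. u \<in> perms n \<and> v \<in> perms n \<and> inv_set n u = ?K 2 1 3 \<and>
            inv_set n v = ?K 3 1 2 \<and> (u,v) \<in> \<Theta>)"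
  proof -
    assume "\<exists>u v. u \<in> perms n \<and> v \<in> perms n \<and> inv_set n u = ?K 1 2 3 \<and>
            inv_set n v = ?K 1 3 2 \<and> (u,v) \<in> \<Theta>"
    then have 0: "(x, acb) \<in> \<Theta>" using uniq x acb by metis
    have 1: "(bac, top) \<in> \<Theta>" using cong_join[OF cong 0 bac(1) join_le(1)[OF x(1) bac(1) le(1)] join_top(2)] .
    have 2: "(bac, bca) \<in> \<Theta>"
      using cong_meet[OF cong 1 bca(1) meet_le(1)[OF bac(1) bca(1) le(4)] meet_le(2)[OF bca(1) top(1) le(6)]] .
    then show ?thesis using bac bca by blast
  qed
  show "(\<exists>u v. u \<in> perms n \<and> v \<in> perms n \<and> inv_set n u = ?K 3 1 2 \<and>
            inv_set n v = ?K 3 2 1 \<and> (u,v) \<in> \<Theta>) \<Longrightarrow>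
         (\<exists>u v. u \<in> perms n \<and> v \<in> perms n \<and> inv_set n u = ?K 1 3 2 \<and>
            inv_set n v = ?K 2 3 1 \<and> (u,v) \<in> \<Theta>)"
  proof -
    assume "\<exists>u v. u \<in> perms n \<and> v \<in> perms n \<and> inv_set n u = ?K 3 1 2 \<and>
            inv_set n v = ?K 3 2 1 \<and> (u,v) \<in> \<Theta>"
    then have 0: "(bca, top) \<in> \<Theta>" using uniq bca top by metis
    have 1: "(x, cab) \<in> \<Theta>" using cong_meet[OF cong 0 cab(1) meet_x(2) meet_le(2)[OF cab(1) top(1) le(5)]] .
    have 2: "(acb, cab) \<in> \<Theta>"
      using cong_join[OF cong 1 acb(1) join_le(1)[OF x(1) acb(1) le(2)] join_le(2)[OF acb(1) cab(1) le(3)]] .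
    then show ?thesis using acb cab by blast
  qed
qed


definition ArcA :: "nat \<Rightarrow> nat \<Rightarrow> nat \<Rightarrow> nat set \<Rightarrow> nat set" where
  "ArcA n a c S = {a} \<union> (S \<inter> {a<..<c}) \<union> {c<..n}"

definition InvA :: "nat \<Rightarrow> nat set \<Rightarrow> (nat \<times> nat) set" where
  "InvA n A = {(p,q). 1 \<le> p \<and> p < q \<and> q \<le> n \<and> p \<in> A \<and> q \<notin> A}"

definition arc_contracted :: "nat \<Rightarrow> ((nat \<Rightarrow> nat) \<times> (nat \<Rightarrow> nat)) set \<Rightarrow> nat \<Rightarrow> nat \<Rightarrow> nat set \<Rightarrow> bool" where
  "arc_contracted n \<Theta> a c S \<longleftrightarrow> (\<forall>u v. u \<in> perms n \<longrightarrow> v \<in> perms n \<longrightarrow> (a,c) \<notin> inv_set n u \<longrightarrow>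
     inv_set n v = insert (a,c) (inv_set n u) \<longrightarrow> InvA n (ArcA n a c S) - {(a,c)} \<subseteq> inv_set n u \<longrightarrow>
     (u,v) \<in> \<Theta>)"

lemma InvA_keyset: "InvA n A = keyset n (\<lambda>v. if v \<in> A then (1::nat) else 0)"
  unfolding InvA_def keyset_def by auto

lemma InvA_minus_keyset:
  assumes "1 \<le> a" "a < c" "c \<le> n"
  shows "InvA n (ArcA n a c S) - {(a,c)} =
    keyset n (\<lambda>v. if v = a \<or> v = c then (1::nat) else if v \<in> ArcA n a c S then 2 else 0)"
proof (rule set_eqI)
  fix e :: "nat \<times> nat"
  obtain p q where e: "e = (p,q)" by force
  let ?A = "ArcA n a c S"
  let ?r = "\<lambda>v. if v = a \<or> v = c then (1::nat) else if v \<in> ?A then 2 else 0"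
  have aA: "a \<in> ?A" and cA: "c \<notin> ?A" unfolding ArcA_def using assms by auto
  have Ale: "v \<in> ?A \<Longrightarrow> a \<le> v" for v unfolding ArcA_def using assms by auto
  have Cle: "v \<le> n \<Longrightarrow> v \<notin> ?A \<Longrightarrow> v \<le> c" for v unfolding ArcA_def by auto
  show "e \<in> InvA n ?A - {(a,c)} \<longleftrightarrow> e \<in> keyset n ?r"
  proof
    assume "e \<in> InvA n ?A - {(a,c)}"
    then have h: "1 \<le> p" "p < q" "q \<le> n" "p \<in> ?A" "q \<notin> ?A" "(p,q) \<noteq> (a,c)"
      unfolding InvA_def e by auto
    have "?r q < ?r p"
    proof (cases "p = a")
      case True
      then have "q \<noteq> c" "q \<noteq> a" using h by auto
      then show ?thesis using True h by auto
    next
      case False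
      then have "p \<noteq> c" "?r p = 2" using h cA by auto
      moreover have "q \<noteq> a" using h Ale by fastforce
      ultimately show ?thesis using h by auto
    qed
    then show "e \<in> keyset n ?r" unfolding keyset_def e using h by auto
  next
    assume "e \<in> keyset n ?r"
    then have h: "1 \<le> p" "p < q" "q \<le> n" "?r q < ?r p" unfolding keyset_def e by auto
    have "p \<in> ?A \<and> q \<notin> ?A \<and> (p,q) \<noteq> (a,c)"
    proof (cases "p = a \<or> p = c")
      case True
      then have "?r q = 0" using h(4) by (auto split: if_splits)
      then have "q \<notin> ?A" "q \<noteq> c" by (auto split: if_splits)
      moreover have "p = a" using True Cle h calculation by (metis not_le)
      ultimately show ?thesis using aA by auto
    next
      case False
      then have "p \<in> ?A" using h(4) by (auto split: if_splits)
      moreover have "q \<notin> ?A" using h False Ale[of p] cA by (auto split: if_splits)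
      ultimately show ?thesis using False by auto
    qed
    then show "e \<in> InvA n ?A - {(a,c)}" unfolding InvA_def e using h by auto
  qed
qed

lemma arc_from_edge:
  assumes cong: "lattice_congruence n \<Theta>" and ac: "1 \<le> a" "a < c" "c \<le> n"
    and u0: "u0 \<in> perms n" and v0: "v0 \<in> perms n" and n0: "(a,c) \<notin> inv_set n u0"
    and e0: "inv_set n v0 = insert (a,c) (inv_set n u0)"
    and s0: "InvA n (ArcA n a c S) - {(a,c)} \<subseteq> inv_set n u0" and th: "(u0,v0) \<in> \<Theta>"
  shows "arc_contracted n \<Theta> a c S"
proof -
  let ?A = "ArcA n a c S"
  have "\<exists>j\<in>perms n. inv_set n j = InvA n ?A" unfolding InvA_keyset by (rule keyset_realize)
  then obtain j where j: "j \<in> perms n" "inv_set n j = InvA n ?A" by blast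
  have "\<exists>j\<in>perms n. inv_set n j = InvA n ?A - {(a,c)}" unfolding InvA_minus_keyset[OF ac] by (rule keyset_realize)
  then obtain js where js: "js \<in> perms n" "inv_set n js = InvA n ?A - {(a,c)}" by blast
  have acA: "(a,c) \<in> InvA n ?A" unfolding InvA_def ArcA_def using ac by auto
  have m1: "is_meet n u0 j js"
  proof -
    have "\<forall>w\<in>perms n. inv_set n w \<subseteq> inv_set n u0 \<and> inv_set n w \<subseteq> inv_set n j \<longrightarrow> inv_set n w \<subseteq> inv_set n js"
      using js(2) j(2) n0 by blast
    moreover have "inv_set n js \<subseteq> inv_set n u0" "inv_set n js \<subseteq> inv_set n j" using js(2) j(2) s0 by blast+
    ultimately show ?thesis unfolding is_meet_def weak_le_def using js(1) by blast
  qed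
  have m2: "is_meet n v0 j j"
  proof -
    have "inv_set n j \<subseteq> inv_set n v0" using j(2) e0 s0 by blast
    then show ?thesis unfolding is_meet_def weak_le_def using j(1) by blast
  qed
  have jj: "(js, j) \<in> \<Theta>" using cong_meet[OF cong th j(1) m1 m2] .
  show ?thesis unfolding arc_contracted_def
  proof (intro allI impI)
    fix u v assume u: "u \<in> perms n" and v: "v \<in> perms n" and n1: "(a,c) \<notin> inv_set n u"
      and e1: "inv_set n v = insert (a,c) (inv_set n u)" and s1: "InvA n ?A - {(a,c)} \<subseteq> inv_set n u"
    have J1: "is_join n js u u" using join_le(1)[OF js(1) u] js(2) s1 by blast
    have J2: "is_join n j u v"
    proof -
      have "inv_set n j \<subseteq> inv_set n v" "inv_set n u \<subseteq> inv_set n v" using j(2) e1 s1 by blast+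
      moreover have "\<forall>w\<in>perms n. inv_set n j \<subseteq> inv_set n w \<and> inv_set n u \<subseteq> inv_set n w \<longrightarrow> inv_set n v \<subseteq> inv_set n w"
      proof (intro ballI impI)
        fix w assume "w \<in> perms n" and hw: "inv_set n j \<subseteq> inv_set n w \<and> inv_set n u \<subseteq> inv_set n w"
        then have "(a,c) \<in> inv_set n w" using acA j(2) by auto
        then show "inv_set n v \<subseteq> inv_set n w" using e1 hw by auto
      qed
      ultimately show ?thesis unfolding is_join_def weak_le_def using v by blast
    qed
    show "(u,v) \<in> \<Theta>" using cong_join[OF cong jj u J1 J2] .
  qed
qed


lemma hkv:
  assumes "a < b" "b < c"
  shows "hk a b c L ka kb kc a = ka" "hk a b c L ka kb kc b = kb" "hk a b c L ka kb kc c = kc"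
    "d \<noteq> a \<Longrightarrow> d \<noteq> b \<Longrightarrow> d \<noteq> c \<Longrightarrow> L d \<Longrightarrow> hk a b c L ka kb kc d = 0"
    "d \<noteq> a \<Longrightarrow> d \<noteq> b \<Longrightarrow> d \<noteq> c \<Longrightarrow> \<not> L d \<Longrightarrow> hk a b c L ka kb kc d = 4"
  using assms unfolding hk_def by auto

lemma InvA_ArcA_mem:
  assumes "(p,q) \<in> InvA n (ArcA n a c S)" "a < c"
  shows "1 \<le> p" "p < q" "q \<le> n" "a \<le> p" "q \<le> c" "p = a \<or> (p \<in> S \<and> a < p \<and> p < c)"
    "q \<noteq> a" "q = c \<or> (q \<notin> S \<and> a < q \<and> q < c)"
  using assms unfolding InvA_def ArcA_def by auto

lemma check_old_R:
  assumes abc: "1 \<le> a" "a < b" "b < c" "c \<le> n" and L: "\<And>d. a < d \<Longrightarrow> d < b \<Longrightarrow> (L d \<longleftrightarrow> d \<notin> S0)"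
  shows "InvA n (ArcA n a b S0) - {(a,b)} \<subseteq> keyset n (hk a b c L 1 2 3)"
proof
  fix e assume e: "e \<in> InvA n (ArcA n a b S0) - {(a,b)}"
  obtain p q where pq: "e = (p,q)" by force
  have m: "(p,q) \<in> InvA n (ArcA n a b S0)" "(p,q) \<noteq> (a,b)" using e pq by auto
  note h = InvA_ArcA_mem[OF m(1) abc(2)]
  note hv = hkv[OF abc(2,3), where L = L]
  have "hk a b c L 1 2 3 q < hk a b c L 1 2 3 p"
  proof (cases "p = a")
    case True
    then have "q \<notin> S0" "a < q" "q < b" using h m by auto
    then show ?thesis using True hv L abc by auto
  next
    case False
    then have p: "p \<in> S0" "a < p" "p < b" using h by auto
    then have "hk a b c L 1 2 3 p = 4" using hv L abc by auto
    moreover have "hk a b c L 1 2 3 q < 4"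
    proof (cases "q = b")
      case True then show ?thesis using hv by auto
    next
      case False
      then have "q \<notin> S0" "a < q" "q < b" using h p by auto
      then show ?thesis using hv L abc by auto
    qed
    ultimately show ?thesis by simp
  qed
  then show "e \<in> keyset n (hk a b c L 1 2 3)" unfolding keyset_def using pq h by auto
qed

lemma check_old_L:
  assumes abc: "1 \<le> a" "a < b" "b < c" "c \<le> n" and L: "\<And>d. b < d \<Longrightarrow> d < c \<Longrightarrow> (L d \<longleftrightarrow> d \<notin> S0)"
  shows "InvA n (ArcA n b c S0) - {(b,c)} \<subseteq> keyset n (hk a b c L 1 2 3)"
proof
  fix e assume e: "e \<in> InvA n (ArcA n b c S0) - {(b,c)}"
  obtain p q where pq: "e = (p,q)" by force
  have m: "(p,q) \<in> InvA n (ArcA n b c S0)" "(p,q) \<noteq> (b,c)" using e pq by auto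
  note h = InvA_ArcA_mem[OF m(1) abc(3)]
  note hv = hkv[OF abc(2,3), where L = L]
  have "hk a b c L 1 2 3 q < hk a b c L 1 2 3 p"
  proof (cases "p = b")
    case True
    then have "q \<notin> S0" "b < q" "q < c" using h m by auto
    then show ?thesis using True hv L abc by auto
  next
    case False
    then have p: "p \<in> S0" "b < p" "p < c" using h by auto
    then have "hk a b c L 1 2 3 p = 4" using hv L abc by auto
    moreover have "hk a b c L 1 2 3 q < 4"
    proof (cases "q = c")
      case True then show ?thesis using hv by auto
    next
      case False
      then have "q \<notin> S0" "b < q" "q < c" using h p by auto
      then show ?thesis using hv L abc by auto
    qed
    ultimately show ?thesis by simp
  qed
  then show "e \<in> keyset n (hk a b c L 1 2 3)" unfolding keyset_def using pq h by auto
qed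

lemma check_new_right:
  assumes abc: "1 \<le> a" "a < b" "b < c" "c \<le> n" and bS: "b \<in> S1"
    and L: "\<And>d. a < d \<Longrightarrow> d < c \<Longrightarrow> d \<noteq> b \<Longrightarrow> (L d \<longleftrightarrow> d \<notin> S1)"
  shows "InvA n (ArcA n a c S1) - {(a,c)} \<subseteq> keyset n (hk a b c L 1 3 2)"
proof
  fix e assume e: "e \<in> InvA n (ArcA n a c S1) - {(a,c)}"
  obtain p q where pq: "e = (p,q)" by force
  have m: "(p,q) \<in> InvA n (ArcA n a c S1)" "(p,q) \<noteq> (a,c)" using e pq by auto
  have ac: "a < c" using abc by auto
  note h = InvA_ArcA_mem[OF m(1) ac]
  note hv = hkv[OF abc(2,3), where L = L]
  have qlow: "q \<noteq> c \<Longrightarrow> hk a b c L 1 3 2 q = 0"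
  proof -
    assume "q \<noteq> c"
    then have "q \<notin> S1" "a < q" "q < c" using h by auto
    then have "q \<noteq> b" "L q" using bS L by auto
    then show ?thesis using hv \<open>a < q\<close> \<open>q < c\<close> by auto
  qed
  have "hk a b c L 1 3 2 q < hk a b c L 1 3 2 p"
  proof (cases "p = a")
    case True
    then have "q \<noteq> c" using m by auto
    then show ?thesis using True hv qlow by auto
  next
    case False
    then have p: "p \<in> S1" "a < p" "p < c" using h by auto
    have "hk a b c L 1 3 2 p \<ge> 3"
    proof (cases "p = b")
      case True then show ?thesis using hv by auto
    next
      case False then have "\<not> L p" using L p by auto
      then show ?thesis using hv p False by auto
    qed
    moreover have "hk a b c L 1 3 2 q < 3" using qlow hv by (cases "q = c") auto
    ultimately show ?thesis by simp
  qed
  then show "e \<in> keyset n (hk a b c L 1 3 2)" unfolding keyset_def using pq h by auto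
qed

lemma check_new_left:
  assumes abc: "1 \<le> a" "a < b" "b < c" "c \<le> n" and bS: "b \<notin> S1"
    and L: "\<And>d. a < d \<Longrightarrow> d < c \<Longrightarrow> d \<noteq> b \<Longrightarrow> (L d \<longleftrightarrow> d \<notin> S1)"
  shows "InvA n (ArcA n a c S1) - {(a,c)} \<subseteq> keyset n (hk a b c L 2 1 3)"
proof
  fix e assume e: "e \<in> InvA n (ArcA n a c S1) - {(a,c)}"
  obtain p q where pq: "e = (p,q)" by force
  have m: "(p,q) \<in> InvA n (ArcA n a c S1)" "(p,q) \<noteq> (a,c)" using e pq by auto
  have ac: "a < c" using abc by auto
  note h = InvA_ArcA_mem[OF m(1) ac]
  note hv = hkv[OF abc(2,3), where L = L]
  have qlow: "q \<noteq> c \<Longrightarrow> q \<noteq> b \<Longrightarrow> hk a b c L 2 1 3 q = 0"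
  proof -
    assume "q \<noteq> c" "q \<noteq> b"
    then have "q \<notin> S1" "a < q" "q < c" using h by auto
    then have "L q" using L \<open>q \<noteq> b\<close> by auto
    then show ?thesis using hv \<open>a < q\<close> \<open>q < c\<close> \<open>q \<noteq> b\<close> by auto
  qed
  have "hk a b c L 2 1 3 q < hk a b c L 2 1 3 p"
  proof (cases "p = a")
    case True
    then have "q \<noteq> c" using m by auto
    then show ?thesis using True hv qlow by (cases "q = b") auto
  next
    case False
    then have p: "p \<in> S1" "a < p" "p < c" using h by auto
    then have "p \<noteq> b" using bS by auto
    then have "\<not> L p" using L p by auto
    then have "hk a b c L 2 1 3 p = 4" using hv p \<open>p \<noteq> b\<close> by auto
    moreover have "hk a b c L 2 1 3 q < 4" using qlow hv by (cases "q = c"; cases "q = b") auto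
    ultimately show ?thesis by simp
  qed
  then show "e \<in> keyset n (hk a b c L 2 1 3)" unfolding keyset_def using pq h by auto
qed


lemma ext_R:
  assumes cong: "lattice_congruence n \<Theta>" and abc: "1 \<le> a" "a < b" "b < c" "c \<le> n"
    and old: "arc_contracted n \<Theta> a b S0" and agree: "\<And>d. a < d \<Longrightarrow> d < b \<Longrightarrow> (d \<in> S1 \<longleftrightarrow> d \<in> S0)"
  shows "arc_contracted n \<Theta> a c S1"
proof -
  define L where "L d = (if a < d \<and> d < b then d \<notin> S0 else if b < d \<and> d < c then d \<notin> S1 else d < a)" for d
  have Lold: "\<And>d. a < d \<Longrightarrow> d < b \<Longrightarrow> (L d \<longleftrightarrow> d \<notin> S0)" unfolding L_def by auto
  have Lnew: "\<And>d. a < d \<Longrightarrow> d < c \<Longrightarrow> d \<noteq> b \<Longrightarrow> (L d \<longleftrightarrow> d \<notin> S1)" unfolding L_def using agree by auto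
  note H = hk_facts[OF abc, where L = L]
  note chk = check_old_R[OF abc Lold]
  have ac: "1 \<le> a" "a < c" "c \<le> n" using abc by auto
  have oldE: "(u,v) \<in> \<Theta>" if "u \<in> perms n" "v \<in> perms n" "(a,b) \<notin> inv_set n u"
     "inv_set n v = insert (a,b) (inv_set n u)" "InvA n (ArcA n a b S0) - {(a,b)} \<subseteq> inv_set n u" for u v
    using old that unfolding arc_contracted_def by blast
  show ?thesis
  proof (cases "b \<in> S1")
    case True
    obtain x where x: "x \<in> perms n" "inv_set n x = keyset n (hk a b c L 1 2 3)" using keyset_realize by blast
    obtain y where y: "y \<in> perms n" "inv_set n y = keyset n (hk a b c L 2 1 3)" using keyset_realize by blast
    have "(x,y) \<in> \<Theta>" using oldE[OF x(1) y(1)] x(2) y(2) H(1,2) chk by simp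
    then obtain u v where uv: "u \<in> perms n" "v \<in> perms n" "inv_set n u = keyset n (hk a b c L 1 3 2)"
      "inv_set n v = keyset n (hk a b c L 2 3 1)" "(u,v) \<in> \<Theta>"
      using hexagon_force(1)[OF cong abc, where L = L] x y by blast
    show ?thesis
      by (rule arc_from_edge[OF cong ac uv(1,2) _ _ _ uv(5)])
         (use uv(3,4) H(5,6) check_new_right[OF abc True Lnew] in simp_all)
  next
    case False
    obtain x where x: "x \<in> perms n" "inv_set n x = keyset n (hk a b c L 2 3 1)" using keyset_realize by blast
    obtain y where y: "y \<in> perms n" "inv_set n y = keyset n (hk a b c L 3 2 1)" using keyset_realize by blast
    have "keyset n (hk a b c L 1 2 3) \<subseteq> keyset n (hk a b c L 2 3 1)" using H(3,5) by auto
    then have "(x,y) \<in> \<Theta>" using oldE[OF x(1) y(1)] x(2) y(2) H(9,10) chk by auto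
    then obtain u v where uv: "u \<in> perms n" "v \<in> perms n" "inv_set n u = keyset n (hk a b c L 2 1 3)"
      "inv_set n v = keyset n (hk a b c L 3 1 2)" "(u,v) \<in> \<Theta>"
      using hexagon_force(2)[OF cong abc, where L = L] x y by blast
    show ?thesis
      by (rule arc_from_edge[OF cong ac uv(1,2) _ _ _ uv(5)])
         (use uv(3,4) H(7,8) check_new_left[OF abc False Lnew] in simp_all)
  qed
qed

lemma ext_L:
  assumes cong: "lattice_congruence n \<Theta>" and abc: "1 \<le> a" "a < b" "b < c" "c \<le> n"
    and old: "arc_contracted n \<Theta> b c S0" and agree: "\<And>d. b < d \<Longrightarrow> d < c \<Longrightarrow> (d \<in> S1 \<longleftrightarrow> d \<in> S0)"
  shows "arc_contracted n \<Theta> a c S1"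
proof -
  define L where "L d = (if a < d \<and> d < b then d \<notin> S1 else if b < d \<and> d < c then d \<notin> S0 else d < a)" for d
  have Lold: "\<And>d. b < d \<Longrightarrow> d < c \<Longrightarrow> (L d \<longleftrightarrow> d \<notin> S0)" unfolding L_def using abc by auto
  have Lnew: "\<And>d. a < d \<Longrightarrow> d < c \<Longrightarrow> d \<noteq> b \<Longrightarrow> (L d \<longleftrightarrow> d \<notin> S1)" unfolding L_def using agree by auto
  note H = hk_facts[OF abc, where L = L]
  note chk = check_old_L[OF abc Lold]
  have ac: "1 \<le> a" "a < c" "c \<le> n" using abc by auto
  have oldE: "(u,v) \<in> \<Theta>" if "u \<in> perms n" "v \<in> perms n" "(b,c) \<notin> inv_set n u"
     "inv_set n v = insert (b,c) (inv_set n u)" "InvA n (ArcA n b c S0) - {(b,c)} \<subseteq> inv_set n u" for u v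
    using old that unfolding arc_contracted_def by blast
  show ?thesis
  proof (cases "b \<in> S1")
    case False
    obtain x where x: "x \<in> perms n" "inv_set n x = keyset n (hk a b c L 1 2 3)" using keyset_realize by blast
    obtain y where y: "y \<in> perms n" "inv_set n y = keyset n (hk a b c L 1 3 2)" using keyset_realize by blast
    have "(x,y) \<in> \<Theta>" using oldE[OF x(1) y(1)] x(2) y(2) H(3,4) chk by simp
    then obtain u v where uv: "u \<in> perms n" "v \<in> perms n" "inv_set n u = keyset n (hk a b c L 2 1 3)"
      "inv_set n v = keyset n (hk a b c L 3 1 2)" "(u,v) \<in> \<Theta>"
      using hexagon_force(3)[OF cong abc, where L = L] x y by blast
    show ?thesis
      by (rule arc_from_edge[OF cong ac uv(1,2) _ _ _ uv(5)])
         (use uv(3,4) H(7,8) check_new_left[OF abc False Lnew] in simp_all)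
  next
    case True
    obtain x where x: "x \<in> perms n" "inv_set n x = keyset n (hk a b c L 3 1 2)" using keyset_realize by blast
    obtain y where y: "y \<in> perms n" "inv_set n y = keyset n (hk a b c L 3 2 1)" using keyset_realize by blast
    have "keyset n (hk a b c L 1 2 3) \<subseteq> keyset n (hk a b c L 3 1 2)" using H(1,7) by auto
    then have "(x,y) \<in> \<Theta>" using oldE[OF x(1) y(1)] x(2) y(2) H(11,12) chk by auto
    then obtain u v where uv: "u \<in> perms n" "v \<in> perms n" "inv_set n u = keyset n (hk a b c L 1 3 2)"
      "inv_set n v = keyset n (hk a b c L 2 3 1)" "(u,v) \<in> \<Theta>"
      using hexagon_force(4)[OF cong abc, where L = L] x y by blast
    show ?thesis
      by (rule arc_from_edge[OF cong ac uv(1,2) _ _ _ uv(5)])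
         (use uv(3,4) H(5,6) check_new_right[OF abc True Lnew] in simp_all)
  qed
qed


lemma arc_cong:
  assumes "\<And>d. a < d \<Longrightarrow> d < c \<Longrightarrow> (d \<in> S \<longleftrightarrow> d \<in> S')"
  shows "arc_contracted n \<Theta> a c S \<longleftrightarrow> arc_contracted n \<Theta> a c S'"
proof -
  have "ArcA n a c S = ArcA n a c S'" unfolding ArcA_def using assms by auto
  then show ?thesis unfolding arc_contracted_def by simp
qed

lemma gen_up:
  assumes b: "2 \<le> b" "b \<le> n - 1" and u: "up b"
  shows "(simple_transp b, simple_transp (b - 1)) \<in> diagram_edges n up"
    "simple_transp (b - 1) \<in> perms n" "simple_transp (b - 1) \<circ> simple_transp b \<in> perms n"
    "inv_set n (simple_transp (b - 1)) = {(b - 1, b)}"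
    "inv_set n (simple_transp (b - 1) \<circ> simple_transp b) = insert (b - 1, Suc b) {(b - 1, b)}"
proof -
  have sb: "Suc (b - 1) = b" using b by auto
  show "(simple_transp b, simple_transp (b - 1)) \<in> diagram_edges n up"
    unfolding diagram_edges_def using b u by (intro UnI1 CollectI exI[of _ b]) simp

  let ?t = "simple_transp (b - 1)"
  show tp: "?t \<in> perms n" using b simple_transp_perm by auto
  show It: "inv_set n ?t = {(b - 1, b)}" using b inv_set_simple[of "b - 1" n] sb by auto
  have tv: "?t b = b - 1" "?t (Suc b) = Suc b" unfolding simple_transp_def using sb
    by (auto simp: transpose_def)
  show "?t \<circ> simple_transp b \<in> perms n" unfolding simple_transp_def[of b] by (rule swap_perm[OF tp]) (use b in auto)
  have bn: "1 \<le> b" "b < n" using b by auto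
  have "inv_set n (?t \<circ> transpose b (Suc b)) = (if ?t b < ?t (Suc b) then insert (?t b, ?t (Suc b)) (inv_set n ?t)
     else inv_set n ?t - {(?t (Suc b), ?t b)})" by (rule swap_inv_set[OF tp bn])
  also have "\<dots> = insert (b - 1, Suc b) {(b - 1, b)}" unfolding tv It using b by simp
  finally show "inv_set n (?t \<circ> simple_transp b) = insert (b - 1, Suc b) {(b - 1, b)}"
    unfolding simple_transp_def[of b] .
qed

lemma gen_down:
  assumes b: "2 \<le> b" "b \<le> n - 1" and u: "\<not> up b"
  shows "(simple_transp (b - 1), simple_transp b) \<in> diagram_edges n up"
    "simple_transp b \<in> perms n" "simple_transp b \<circ> simple_transp (b - 1) \<in> perms n"
    "inv_set n (simple_transp b) = {(b, Suc b)}"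
    "inv_set n (simple_transp b \<circ> simple_transp (b - 1)) = insert (b - 1, Suc b) {(b, Suc b)}"
proof -
  have sb: "Suc (b - 1) = b" using b by auto
  show "(simple_transp (b - 1), simple_transp b) \<in> diagram_edges n up"
    unfolding diagram_edges_def using b u by (intro UnI2 CollectI exI[of _ b]) simp

  let ?t = "simple_transp b"
  show tp: "?t \<in> perms n" using b simple_transp_perm by auto
  show It: "inv_set n ?t = {(b, Suc b)}" using b inv_set_simple[of b n] by auto
  have tv: "?t (b - 1) = b - 1" "?t (Suc (b - 1)) = Suc b" unfolding simple_transp_def using sb b
    by (auto simp: transpose_def)
  show "?t \<circ> simple_transp (b - 1) \<in> perms n" unfolding simple_transp_def[of "b - 1"]
    by (rule swap_perm[OF tp]) (use b in auto)
  have bn: "1 \<le> b - 1" "b - 1 < n" using b by auto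
  have "inv_set n (?t \<circ> transpose (b - 1) (Suc (b - 1))) = (if ?t (b - 1) < ?t (Suc (b - 1))
     then insert (?t (b - 1), ?t (Suc (b - 1))) (inv_set n ?t)
     else inv_set n ?t - {(?t (Suc (b - 1)), ?t (b - 1))})" by (rule swap_inv_set[OF tp bn])
  also have "\<dots> = insert (b - 1, Suc b) {(b, Suc b)}" unfolding tv It using b by simp
  finally show "inv_set n (?t \<circ> simple_transp (b - 1)) = insert (b - 1, Suc b) {(b, Suc b)}"
    unfolding simple_transp_def[of "b - 1"] .
qed

definition good_cong :: "nat \<Rightarrow> (nat \<Rightarrow> bool) \<Rightarrow> ((nat \<Rightarrow> nat) \<times> (nat \<Rightarrow> nat)) set \<Rightarrow> bool" where
  "good_cong n up \<Theta> \<longleftrightarrow> lattice_congruence n \<Theta> \<and> (\<forall>(s, t) \<in> diagram_edges n up. (t, t \<circ> s) \<in> \<Theta>)"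

lemma gen_arc:
  assumes G: "good_cong n up \<Theta>" and b: "2 \<le> b" "b \<le> n - 1"
  shows "arc_contracted n \<Theta> (b - 1) (Suc b) (if up b then {} else {b})"
proof -
  have cong: "lattice_congruence n \<Theta>" using G good_cong_def by auto
  have ac: "1 \<le> b - 1" "b - 1 < Suc b" "Suc b \<le> n" using b by auto
  show ?thesis
  proof (cases "up b")
    case True
    note g = gen_up[of b n up, OF b True]
    have th: "(simple_transp (b - 1), simple_transp (b - 1) \<circ> simple_transp b) \<in> \<Theta>"
      using G g(1) unfolding good_cong_def by blast
    have chk: "InvA n (ArcA n (b - 1) (Suc b) {}) - {(b - 1, Suc b)} \<subseteq> {(b - 1, b)}"
    proof
      fix e assume e: "e \<in> InvA n (ArcA n (b - 1) (Suc b) {}) - {(b - 1, Suc b)}"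
      obtain p q where pq: "e = (p,q)" by force
      have m: "(p,q) \<in> InvA n (ArcA n (b - 1) (Suc b) {})" "(p,q) \<noteq> (b - 1, Suc b)" using e pq by auto
      have lt: "b - 1 < Suc b" by simp
      note h = InvA_ArcA_mem[OF m(1) lt]
      have "p = b - 1" "q = b" using h m(2) b by auto
      then show "e \<in> {(b - 1, b)}" using pq by auto
    qed
    have "arc_contracted n \<Theta> (b - 1) (Suc b) {}"
    proof (rule arc_from_edge[OF cong ac g(2,3) _ _ _ th])
      show "(b - 1, Suc b) \<notin> inv_set n (simple_transp (b - 1))" unfolding g(4) by simp
      show "inv_set n (simple_transp (b - 1) \<circ> simple_transp b) = insert (b - 1, Suc b) (inv_set n (simple_transp (b - 1)))"
        unfolding g(4,5) ..
      show "InvA n (ArcA n (b - 1) (Suc b) {}) - {(b - 1, Suc b)} \<subseteq> inv_set n (simple_transp (b - 1))"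
        unfolding g(4) by (rule chk)
    qed
    then show ?thesis using True by simp
  next
    case False
    note g = gen_down[of b n up, OF b False]
    have th: "(simple_transp b, simple_transp b \<circ> simple_transp (b - 1)) \<in> \<Theta>"
      using G g(1) unfolding good_cong_def by blast
    have chk: "InvA n (ArcA n (b - 1) (Suc b) {b}) - {(b - 1, Suc b)} \<subseteq> {(b, Suc b)}"
    proof
      fix e assume e: "e \<in> InvA n (ArcA n (b - 1) (Suc b) {b}) - {(b - 1, Suc b)}"
      obtain p q where pq: "e = (p,q)" by force
      have m: "(p,q) \<in> InvA n (ArcA n (b - 1) (Suc b) {b})" "(p,q) \<noteq> (b - 1, Suc b)" using e pq by auto
      have lt: "b - 1 < Suc b" by simp
      note h = InvA_ArcA_mem[OF m(1) lt]
      have "p = b" "q = Suc b" using h m(2) b by auto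
      then show "e \<in> {(b, Suc b)}" using pq by auto
    qed
    have "arc_contracted n \<Theta> (b - 1) (Suc b) {b}"
    proof (rule arc_from_edge[OF cong ac g(2,3) _ _ _ th])
      show "(b - 1, Suc b) \<notin> inv_set n (simple_transp b)" unfolding g(4) using b by simp
      show "inv_set n (simple_transp b \<circ> simple_transp (b - 1)) = insert (b - 1, Suc b) (inv_set n (simple_transp b))"
        unfolding g(4,5) ..
      show "InvA n (ArcA n (b - 1) (Suc b) {b}) - {(b - 1, Suc b)} \<subseteq> inv_set n (simple_transp b)"
        unfolding g(4) by (rule chk)
    qed
    then show ?thesis using False by simp
  qed
qed

lemma wrong_arc:
  assumes G: "good_cong n up \<Theta>" and mM: "1 \<le> m" "m < b" "b < M" "M \<le> n"
    and wrong: "b \<in> S \<longleftrightarrow> \<not> up b"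
  shows "arc_contracted n \<Theta> m M S"
proof -
  have cong: "lattice_congruence n \<Theta>" using G good_cong_def by auto
  have b: "2 \<le> b" "b \<le> n - 1" using mM by auto
  let ?S0 = "if up b then {} else {b}"
  have a0: "arc_contracted n \<Theta> (b - 1) (Suc b) S"
  proof -
    have "arc_contracted n \<Theta> (b - 1) (Suc b) ?S0" by (rule gen_arc[OF G b])
    moreover have "\<And>d. b - 1 < d \<Longrightarrow> d < Suc b \<Longrightarrow> (d \<in> ?S0 \<longleftrightarrow> d \<in> S)"
    proof -
      fix d assume "b - 1 < d" "d < Suc b"
      then have "d = b" by auto
      then show "d \<in> ?S0 \<longleftrightarrow> d \<in> S" using wrong by auto
    qed
    ultimately show ?thesis using arc_cong by blast
  qed
  have a1: "arc_contracted n \<Theta> (b - 1) M S"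
  proof (cases "Suc b < M")
    case True
    show ?thesis by (rule ext_R[OF cong _ _ True mM(4) a0]) (use mM in auto)
  next
    case False
    then have "M = Suc b" using mM by auto
    then show ?thesis using a0 by simp
  qed
  show ?thesis
  proof (cases "m < b - 1")
    case True
    show ?thesis by (rule ext_L[OF cong mM(1) True _ mM(4) a1]) (use mM in auto)
  next
    case False
    then have "m = b - 1" using mM by auto
    then show ?thesis using a1 by simp
  qed
qed


lemma list_perm:
  assumes d: "distinct L" and s: "set L = {1..n}"
  shows "(\<lambda>i. if i \<in> {1..n} then L ! (i - 1) else i) \<in> perms n"
proof -
  let ?w = "\<lambda>i. if i \<in> {1..n} then L ! (i - 1) else i"
  have len: "length L = n" using d s distinct_card by fastforce
  have inj: "inj_on ?w {1..n}"
  proof (rule inj_onI)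
    fix i j assume i: "i \<in> {1..n}" and j: "j \<in> {1..n}" and e: "?w i = ?w j"
    then have "L ! (i - 1) = L ! (j - 1)" by simp
    then have "i - 1 = j - 1" using d len i j nth_eq_iff_index_eq by fastforce
    then show "i = j" using i j by auto
  qed
  have img: "?w ` {1..n} = {1..n}"
  proof
    show "?w ` {1..n} \<subseteq> {1..n}"
    proof
      fix y assume "y \<in> ?w ` {1..n}"
      then obtain i where i: "i \<in> {1..n}" "y = ?w i" by blast
      then have "i - 1 < length L" using len by auto
      then have "L ! (i - 1) \<in> set L" by (rule nth_mem)
      then show "y \<in> {1..n}" using i s by simp
    qed
    show "{1..n} \<subseteq> ?w ` {1..n}"
    proof
      fix v assume "v \<in> {1..n}"
      then obtain k where k: "k < length L" "L ! k = v" using s by (metis in_set_conv_nth)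
      then show "v \<in> ?w ` {1..n}" using len by (intro image_eqI[of _ _ "Suc k"]) auto
    qed
  qed
  show ?thesis unfolding perms_def using inj img by (auto simp: bij_betw_def)
qed

lemma two_run_inv:
  assumes sx: "sorted_wrt (<) xs" and sy: "sorted_wrt (<) ys" and d: "distinct (xs @ ys)"
    and s: "set (xs @ ys) = {1..n}"
  defines "w \<equiv> (\<lambda>i. if i \<in> {1..n} then (xs @ ys) ! (i - 1) else i)"
  shows "inv_set n w = {(p,q). p \<in> set ys \<and> q \<in> set xs \<and> p < q}"
proof -
  let ?L = "xs @ ys"
  have len: "length ?L = n" using distinct_card[OF d] s by simp
  have wi: "w i = ?L ! (i - 1)" if "i \<in> {1..n}" for i using that unfolding w_def by simp
  have nthL: "?L ! k = (if k < length xs then xs ! k else ys ! (k - length xs))" for k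
    by (simp add: nth_append)
  show ?thesis
  proof (rule set_eqI)
    fix e :: "nat \<times> nat"
    obtain p q where e: "e = (p,q)" by force
    show "e \<in> inv_set n w \<longleftrightarrow> e \<in> {(p,q). p \<in> set ys \<and> q \<in> set xs \<and> p < q}"
    proof
      assume "e \<in> inv_set n w"
      then obtain i j where ij: "p = w j" "q = w i" "1 \<le> i" "i < j" "j \<le> n" "w i > w j"
        unfolding inv_set_def e by blast
      have i1: "i - 1 < j - 1" "j - 1 < length ?L" using ij len by auto
      have wi': "w i = ?L ! (i - 1)" "w j = ?L ! (j - 1)" using wi ij by auto
      have A1: "?L ! k = xs ! k" if "k < length xs" for k using that by (simp add: nth_append)
      have A2: "?L ! k = ys ! (k - length xs)" if "\<not> k < length xs" for k using that by (simp add: nth_append)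
      have ilt: "i - 1 < length xs"
      proof (rule ccontr)
        assume c: "\<not> i - 1 < length xs"
        then have c2: "\<not> j - 1 < length xs" using i1 by auto
        have "ys ! (i - 1 - length xs) < ys ! (j - 1 - length xs)"
          using sorted_wrt_nth_less[OF sy] i1 c c2 len by auto
        then show False using ij(6) wi' A2[OF c] A2[OF c2] by simp
      qed
      have jge: "\<not> j - 1 < length xs"
      proof
        assume c: "j - 1 < length xs"
        then have "xs ! (i - 1) < xs ! (j - 1)" using sorted_wrt_nth_less[OF sx] i1 by auto
        then show False using ij(6) wi' A1[OF c] A1[OF ilt] by simp
      qed
      have q: "q = xs ! (i - 1)" using ij(2) wi'(1) A1[OF ilt] by simp
      have p: "p = ys ! (j - 1 - length xs)" using ij(1) wi'(2) A2[OF jge] by simp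
      have jl: "j - 1 - length xs < length ys" using i1 jge by auto
      have "q \<in> set xs" using q ilt by simp
      moreover have "p \<in> set ys" using p jl by simp
      moreover have "p < q" using ij by simp
      ultimately show "e \<in> {(p,q). p \<in> set ys \<and> q \<in> set xs \<and> p < q}" using e by simp
    next
      assume "e \<in> {(p,q). p \<in> set ys \<and> q \<in> set xs \<and> p < q}"
      then have pq: "p \<in> set ys" "q \<in> set xs" "p < q" using e by auto
      obtain k where k: "k < length xs" "xs ! k = q" using pq(2) by (metis in_set_conv_nth)
      obtain l where l: "l < length ys" "ys ! l = p" using pq(1) by (metis in_set_conv_nth)
      have "w (Suc k) = q" "w (Suc (length xs + l)) = p" using k l len unfolding w_def by (auto simp: nth_append)
      moreover have "Suc k < Suc (length xs + l)" "Suc (length xs + l) \<le> n" using k l len by auto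
      ultimately show "e \<in> inv_set n w" unfolding inv_set_def e using pq(3)
        by (intro CollectI exI[of _ "Suc k"] exI[of _ "Suc (length xs + l)"]) auto
    qed
  qed
qed

lemma ArcA_props:
  assumes "1 \<le> m" "m < M" "M \<le> n"
  shows "m \<in> ArcA n m M S" "M \<notin> ArcA n m M S" "ArcA n m M S \<subseteq> {1..n}"
    "\<And>v. v \<in> ArcA n m M S \<Longrightarrow> m \<le> v" "\<And>v. v \<in> {1..n} \<Longrightarrow> v \<notin> ArcA n m M S \<Longrightarrow> v \<le> M"
  using assms unfolding ArcA_def by auto

lemma gamma_facts:
  fixes S :: "nat set"
  assumes mM: "1 \<le> m" "m < M" "M \<le> n"
  defines "A \<equiv> ArcA n m M S"
  defines "k \<equiv> card ({1..n} - A)"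
  shows "gamma_of n A \<in> perms n" "inv_set n (gamma_of n A) = InvA n A"
    "1 \<le> k" "k < n" "gamma_of n A k = M" "gamma_of n A (Suc k) = m"
proof -
  note AP = ArcA_props[OF mM, where S = S, folded A_def]
  let ?C = "{1..n} - A"
  define xs where "xs = sorted_list_of_set ?C"
  define ys where "ys = sorted_list_of_set A"
  have fin: "finite ?C" "finite A" using AP(3) finite_subset by auto
  have sx: "sorted_wrt (<) xs" "set xs = ?C" "length xs = k"
    unfolding xs_def k_def using fin by (simp_all add: strict_sorted_list_of_set)
  have sy: "sorted_wrt (<) ys" "set ys = A" using fin unfolding ys_def by (simp_all add: strict_sorted_list_of_set)
  have dis: "distinct (xs @ ys)" using sx sy strict_sorted_iff by (auto simp: distinct_append)
  have st: "set (xs @ ys) = {1..n}" using sx sy AP(3) by auto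
  have g: "gamma_of n A = (\<lambda>i. if i \<in> {1..n} then (xs @ ys) ! (i - 1) else i)"
    unfolding gamma_of_def xs_def ys_def by simp
  show "gamma_of n A \<in> perms n" unfolding g using list_perm[OF dis st] .
  show "inv_set n (gamma_of n A) = InvA n A"
    unfolding g two_run_inv[OF sx(1) sy(1) dis st] sx(2) sy(2) InvA_def using AP(3) by auto
  have Mx: "M \<in> set xs" using sx AP mM by auto
  have my: "m \<in> set ys" using sy AP by auto
  have kpos: "1 \<le> k" using Mx sx by (cases xs) auto
  have ylen: "length ys \<ge> 1" using my by (cases ys) auto
  have lenn: "length (xs @ ys) = n" using distinct_card[OF dis] st by simp
  show "1 \<le> k" by (rule kpos)
  show "k < n" using lenn ylen sx by auto
  have last: "xs ! (k - 1) = M"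
  proof -
    obtain j where j: "j < length xs" "xs ! j = M" using Mx by (metis in_set_conv_nth)
    have "xs ! (k - 1) \<in> ?C" using sx kpos by (metis diff_less nth_mem zero_less_one le_less_trans less_numeral_extra(1) linorder_not_le)
    then have le1: "xs ! (k - 1) \<le> M" using AP by auto
    have "j \<le> k - 1" using j sx by auto
    then have "M \<le> xs ! (k - 1)" using j sorted_wrt_nth_less[OF sx(1), of j "k - 1"] sx kpos
      by (cases "j = k - 1") auto
    then show ?thesis using le1 by simp
  qed
  have first: "ys ! 0 = m"
  proof -
    obtain j where j: "j < length ys" "ys ! j = m" using my by (metis in_set_conv_nth)
    have "ys ! 0 \<in> A" using sy ylen by (metis nth_mem less_le_trans zero_less_one)
    then have le1: "m \<le> ys ! 0" using AP by auto
    have "ys ! 0 \<le> m" using j sorted_wrt_nth_less[OF sy(1), of 0 j] by (cases "j = 0") auto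
    then show ?thesis using le1 by simp
  qed
  show "gamma_of n A k = M" unfolding g using kpos \<open>k < n\<close> last sx by (auto simp: nth_append)
  show "gamma_of n A (Suc k) = m" unfolding g using kpos \<open>k < n\<close> first sx by (auto simp: nth_append)
qed


lemma desc_cover:
  assumes g: "g \<in> perms n" and j: "1 \<le> j" "j < n" and d: "g (Suc j) < g j"
  shows "g \<circ> transpose j (Suc j) \<in> perms n"
    "inv_set n (g \<circ> transpose j (Suc j)) = inv_set n g - {(g (Suc j), g j)}"
    "(g (Suc j), g j) \<in> inv_set n g"
    "covers n g (g \<circ> transpose j (Suc j))"
proof -
  let ?x = "g \<circ> transpose j (Suc j)"
  show xp: "?x \<in> perms n" by (rule swap_perm[OF g j])
  show Ix: "inv_set n ?x = inv_set n g - {(g (Suc j), g j)}" using swap_inv_set[OF g j] d by simp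
  have P: "g permutes {1..n}" using g perms_iff by auto
  have r: "g j \<in> {1..n}" "g (Suc j) \<in> {1..n}" using j perm_in[OF g] by auto
  have iv: "inv g (g j) = j" "inv g (g (Suc j)) = Suc j" using P by (simp_all add: permutes_inverses)
  show e: "(g (Suc j), g j) \<in> inv_set n g" unfolding inv_set_mem[OF g] iv using r d by auto
  have ne: "?x \<noteq> g"
  proof
    assume "?x = g"
    then have "inv_set n g = inv_set n g - {(g (Suc j), g j)}" using Ix by simp
    then show False using e by blast
  qed
  have nomid: "\<not> (\<exists>z\<in>perms n. weak_less n ?x z \<and> weak_less n z g)"
  proof
    assume "\<exists>z\<in>perms n. weak_less n ?x z \<and> weak_less n z g"
    then obtain z where z: "z \<in> perms n" "inv_set n ?x \<subseteq> inv_set n z" "inv_set n z \<subseteq> inv_set n g"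
      "z \<noteq> ?x" "z \<noteq> g" unfolding weak_less_def weak_le_def by blast
    show False
    proof (cases "(g (Suc j), g j) \<in> inv_set n z")
      case True
      then have "inv_set n z = inv_set n g" using z Ix by auto
      then show False using inv_set_inj z g by blast
    next
      case False
      then have "inv_set n z = inv_set n ?x" using z Ix by auto
      then show False using inv_set_inj z xp by blast
    qed
  qed
  have wl: "weak_less n ?x g" unfolding weak_less_def weak_le_def using Ix ne by auto
  show "covers n g ?x" unfolding covers_def using xp g wl nomid by blast
qed

lemma InvA_full:
  assumes mM: "1 \<le> m" "m < M" "M \<le> n" and X: "biclosed n X" and sub: "X \<subseteq> InvA n (ArcA n m M S)"
    and mMX: "(m,M) \<in> X"
  shows "InvA n (ArcA n m M S) \<subseteq> X"
proof
  let ?A = "ArcA n m M S"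
  note AP = ArcA_props[OF mM, where S = S]
  have co: "\<And>x y z. (x,z) \<in> X \<Longrightarrow> x < y \<Longrightarrow> y < z \<Longrightarrow> (x,y) \<in> X \<or> (y,z) \<in> X"
    using X unfolding biclosed_def coclosedP_def by blast
  fix e assume e: "e \<in> InvA n ?A"
  obtain p q where pq: "e = (p,q)" by force
  have h: "1 \<le> p" "p < q" "q \<le> n" "p \<in> ?A" "q \<notin> ?A" using e pq unfolding InvA_def by auto
  have pM: "(p,M) \<in> X"
  proof (cases "p = m")
    case True then show ?thesis using mMX by simp
  next
    case False
    have "m < p" using AP(4)[OF h(4)] False by auto
    moreover have "q \<le> M" using AP(5) h by auto
    ultimately have "(m,p) \<in> X \<or> (p,M) \<in> X" using co[OF mMX] h by auto
    moreover have "(m,p) \<notin> X" using sub h(4) unfolding InvA_def by auto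
    ultimately show ?thesis by auto
  qed
  show "e \<in> X"
  proof (cases "q = M")
    case True then show ?thesis using pM pq by simp
  next
    case False
    have "q \<in> {1..n}" using h by auto
    then have "q \<le> M" using AP(5) h(5) by blast
    then have "q < M" using False by simp
    then have "(p,q) \<in> X \<or> (q,M) \<in> X" using co[OF pM] h by auto
    moreover have "(q,M) \<notin> X" using sub h(5) unfolding InvA_def by auto
    ultimately show ?thesis using pq by auto
  qed
qed

lemma ji_lemma:
  assumes mM: "1 \<le> m" "m < M" "M \<le> n" and g: "g \<in> perms n"
    and Ig: "inv_set n g = InvA n (ArcA n m M S)"
    and k: "1 \<le> k" "k < n" "g k = M" "g (Suc k) = m"
  shows "join_irreducible n g" "lower_cover n g = g \<circ> transpose k (Suc k)"
    "inv_set n (g \<circ> transpose k (Suc k)) = InvA n (ArcA n m M S) - {(m,M)}"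
    "g \<circ> transpose k (Suc k) \<in> perms n"
proof -
  let ?g' = "g \<circ> transpose k (Suc k)"
  have d: "g (Suc k) < g k" using k mM by simp
  note D = desc_cover[OF g k(1,2) d]
  show Ig': "inv_set n ?g' = InvA n (ArcA n m M S) - {(m,M)}" using D(2) Ig k by simp
  show g'p: "?g' \<in> perms n" using D(1) .
  have uniq: "x = ?g'" if c: "covers n g x" for x
  proof -
    have x: "x \<in> perms n" "inv_set n x \<subseteq> inv_set n g" "x \<noteq> g"
      using c unfolding covers_def weak_less_def weak_le_def by auto
    have nm: "(m,M) \<notin> inv_set n x"
    proof
      assume "(m,M) \<in> inv_set n x"
      then have "InvA n (ArcA n m M S) \<subseteq> inv_set n x"
        using InvA_full[OF mM inv_set_biclosed[OF x(1)]] x(2) Ig by blast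
      then have "inv_set n x = inv_set n g" using x(2) Ig by auto
      then show False using inv_set_inj x g by blast
    qed
    then have sub: "inv_set n x \<subseteq> inv_set n ?g'" using x(2) Ig Ig' by auto
    show "x = ?g'"
    proof (rule ccontr)
      assume ne: "x \<noteq> ?g'"
      have "weak_less n x ?g'" using sub ne unfolding weak_less_def weak_le_def by auto
      moreover have "weak_less n ?g' g" using D(4) unfolding covers_def by auto
      ultimately show False using c g'p unfolding covers_def by blast
    qed
  qed
  have ex: "\<exists>!x. covers n g x" using D(4) uniq by blast
  show "join_irreducible n g" unfolding join_irreducible_def using g ex by auto
  show "lower_cover n g = ?g'" unfolding lower_cover_def using ex D(4) uniq by (metis the_equality)
qed

lemma conj_transpose:
  assumes g: "g \<in> perms n"
  shows "g \<circ> transpose k (Suc k) \<circ> inv g = transpose (g k) (g (Suc k))"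
proof -
  have P: "g permutes {1..n}" using g perms_iff by auto
  have b: "bij g" using P permutes_bij by auto
  have "transpose (g k) (g (Suc k)) \<circ> g = g \<circ> transpose (inv g (g k)) (inv g (g (Suc k)))"
    using transpose_comp_eq[OF b] by blast
  also have "\<dots> = g \<circ> transpose k (Suc k)" using P by (simp add: permutes_inverses)
  finally have e: "g \<circ> transpose k (Suc k) = transpose (g k) (g (Suc k)) \<circ> g" by simp
  have "g \<circ> inv g = id" using P by (rule permutes_inv_o)
  then show ?thesis unfolding e by (simp add: o_assoc[symmetric])
qed

lemma transpose_eq_pair:
  assumes ne: "a \<noteq> b" and e: "transpose a b = transpose c d"
  shows "{a,b} = {c,d}"
proof -
  have 1: "transpose c d a = b" "transpose c d b = a" using e by (metis transpose_apply_first transpose_apply_second)+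
  have "a \<in> {c,d}" using 1 ne by (metis insertCI transpose_apply_other)
  moreover have "b \<in> {c,d}" using 1 ne by (metis insertCI transpose_apply_other)
  moreover have "c \<noteq> d" using 1 ne by auto
  ultimately show ?thesis using ne by auto
qed

lemma has_refl_intro:
  assumes g: "g \<in> perms n" and k: "1 \<le> k" "k < n" "g k = M" "g (Suc k) = m" and mM: "m < M"
  shows "has_left_reflection n g (transpose m M)"
  unfolding has_left_reflection_def simple_transp_def
  using conj_transpose[OF g, of k] k mM by (intro exI[of _ k]) (auto simp: transpose_commute)

lemma has_refl_elim:
  assumes g: "g \<in> perms n" and h: "has_left_reflection n g (transpose m M)" and mM: "m < M"
  obtains i where "1 \<le> i" "i < n" "g i = M" "g (Suc i) = m"
proof -
  obtain i where i: "1 \<le> i" "i < n" "g i > g (Suc i)" "transpose m M = g \<circ> simple_transp i \<circ> inv g"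
    using h unfolding has_left_reflection_def by blast
  have "transpose m M = transpose (g i) (g (Suc i))"
    using i(4) conj_transpose[OF g, of i] unfolding simple_transp_def by simp
  then have "{m,M} = {g i, g (Suc i)}" using transpose_eq_pair[of m M] mM by simp
  then have "g i = M" "g (Suc i) = m" using i(3) mM by (auto simp: doubleton_eq_iff)
  then show ?thesis using that i by blast
qed


lemma mono_run:
  assumes h: "\<And>t. lo \<le> t \<Longrightarrow> t < hi \<Longrightarrow> g t < g (Suc t)"
  shows "lo \<le> j \<Longrightarrow> j < j' \<Longrightarrow> j' \<le> hi \<Longrightarrow> (g j :: nat) < g j'"
proof (induction j')
  case 0 then show ?case by simp
next
  case (Suc j'')
  show ?case
  proof (cases "j = j''")
    case True then show ?thesis using h Suc.prems by auto
  next
    case False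
    then have "g j < g j''" using Suc by auto
    moreover have "g j'' < g (Suc j'')" using h Suc.prems False by auto
    ultimately show ?thesis by simp
  qed
qed

lemma runs_inv:
  assumes g: "g \<in> perms n" and i: "1 \<le> i" "i < n"
    and mono: "\<And>j. 1 \<le> j \<Longrightarrow> j < n \<Longrightarrow> j \<noteq> i \<Longrightarrow> g j < g (Suc j)"
  shows "inv_set n g = InvA n (g ` {Suc i..n})"
    "\<And>j. 1 \<le> j \<Longrightarrow> j \<le> i \<Longrightarrow> g j \<le> g i"
    "\<And>j. Suc i \<le> j \<Longrightarrow> j \<le> n \<Longrightarrow> g (Suc i) \<le> g j"
proof -
  have r1: "g j < g j'" if "1 \<le> j" "j < j'" "j' \<le> i" for j j'
  proof (rule mono_run[of 1 i g, OF _ that])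
    fix t assume "1 \<le> t" "t < i"
    then show "g t < g (Suc t)" using mono i by auto
  qed
  have r2: "g j < g j'" if "Suc i \<le> j" "j < j'" "j' \<le> n" for j j'
    using mono_run[of "Suc i" n g, OF _ that] mono by auto
  show "\<And>j. 1 \<le> j \<Longrightarrow> j \<le> i \<Longrightarrow> g j \<le> g i" using r1 by (metis le_less)
  show "\<And>j. Suc i \<le> j \<Longrightarrow> j \<le> n \<Longrightarrow> g (Suc i) \<le> g j" using r2 by (metis le_less)
  have P: "g permutes {1..n}" using g perms_iff by auto
  have inj: "g x = g y \<Longrightarrow> x = y" for x y using P by (metis permutes_inverses(2))
  let ?A = "g ` {Suc i..n}"
  show "inv_set n g = InvA n ?A"
  proof (rule set_eqI)
    fix e :: "nat \<times> nat"
    obtain p q where e: "e = (p,q)" by force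
    show "e \<in> inv_set n g \<longleftrightarrow> e \<in> InvA n ?A"
    proof
      assume "e \<in> inv_set n g"
      then obtain a b where ab: "p = g b" "q = g a" "1 \<le> a" "a < b" "b \<le> n" "g a > g b"
        unfolding inv_set_def e by blast
      have ai: "a \<le> i"
      proof (rule ccontr)
        assume "\<not> a \<le> i"
        then have "Suc i \<le> a" by simp
        then show False using r2[of a b] ab by auto
      qed
      have bi: "\<not> b \<le> i" using r1[of a b] ab by auto
      have pA: "p \<in> ?A" using ab bi by auto
      have qA: "q \<notin> ?A"
      proof
        assume "q \<in> ?A"
        then obtain t where t: "q = g t" "Suc i \<le> t" by auto
        then have "t = a" using ab inj by metis
        then show False using t ai by simp
      qed
      have "(p,q) \<in> Tn n" using inv_set_sub[OF g] \<open>e \<in> inv_set n g\<close> e by auto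
      then show "e \<in> InvA n ?A" unfolding InvA_def Tn_def e using pA qA by auto
    next
      assume "e \<in> InvA n ?A"
      then have h: "1 \<le> p" "p < q" "q \<le> n" "p \<in> ?A" "q \<notin> ?A" unfolding InvA_def e by auto
      obtain b where b: "p = g b" "Suc i \<le> b" "b \<le> n" using h(4) by auto
      have qn: "q \<in> {1..n}" using h by auto
      define a where "a = inv g q"
      have a: "g a = q" "a \<in> {1..n}" unfolding a_def using P qn
        by (simp add: permutes_inverses, metis permutes_in_image permutes_inv)
      have "a \<le> i" using a h(5) by (metis atLeastAtMost_iff image_eqI not_less_eq_eq)
      then have "1 \<le> a" "a < b" "b \<le> n" "g a > g b" using a b h by auto
      then show "e \<in> inv_set n g" unfolding inv_set_def e using a b by blast
    qed
  qed
qed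


lemma mM_InvA: "1 \<le> m \<Longrightarrow> m < M \<Longrightarrow> M \<le> n \<Longrightarrow> (m,M) \<in> InvA n (ArcA n m M S)"
  unfolding InvA_def ArcA_def by auto

theorem proposition6p7:
  fixes n :: nat and up :: "nat \<Rightarrow> bool" and m M :: nat
  assumes "1 \<le> m" and "m < M" and "M \<le> n"
  shows "(\<exists>!g. join_irreducible n g \<and> \<not> contracts n (Theta_G n up) g \<and>
            has_left_reflection n g (transpose m M))
       \<and> (let A = {m} \<union> {b. m < b \<and> b < M \<and> up b} \<union> {b. M < b \<and> b \<le> n}
          in join_irreducible n (gamma_of n A) \<and> \<not> contracts n (Theta_G n up) (gamma_of n A) \<and>
             has_left_reflection n (gamma_of n A) (transpose m M))"
proof -
  have mM: "1 \<le> m" "m < M" "M \<le> n" using assms by auto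
  define S0 where "S0 = {b. up b}"
  define A where "A = ArcA n m M S0"
  have Aeq: "{m} \<union> {b. m < b \<and> b < M \<and> up b} \<union> {b. M < b \<and> b \<le> n} = A"
    unfolding A_def ArcA_def S0_def by auto
  define k where "k = card ({1..n} - A)"
  note GF = gamma_facts[OF mM, where S = S0, folded A_def, folded k_def]
  define \<gamma> where "\<gamma> = gamma_of n A"
  have gp: "\<gamma> \<in> perms n" and Ig: "inv_set n \<gamma> = InvA n (ArcA n m M S0)"
    using GF(1,2) unfolding \<gamma>_def A_def by auto
  have k: "1 \<le> k" "k < n" "\<gamma> k = M" "\<gamma> (Suc k) = m" using GF(3-6) unfolding \<gamma>_def by auto
  note J = ji_lemma[OF mM gp Ig k]
  have refl: "has_left_reflection n \<gamma> (transpose m M)" using has_refl_intro[OF gp k mM(2)] .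
  have notc: "\<not> contracts n (Theta_G n up) \<gamma>"
  proof
    assume "contracts n (Theta_G n up) \<gamma>"
    then have "(\<gamma>, \<gamma> \<circ> transpose k (Suc k)) \<in> ThetaC n up"
      unfolding contracts_def J(2) using Theta_G_sub_ThetaC by blast
    then have F: "Fset up (InvA n (ArcA n m M S0)) = Fset up (InvA n (ArcA n m M S0) - {(m,M)})"
      using ThetaC_Fset Ig J(3) by metis
    have "(m,M) \<in> Fset up (InvA n (ArcA n m M S0))"
    proof -
      have "\<not> bad up (InvA n (ArcA n m M S0)) m M"
        unfolding bad_def InvA_def ArcA_def S0_def by auto
      then show ?thesis unfolding Fset_def using mM_InvA[OF mM] by auto
    qed
    moreover have "(m,M) \<notin> Fset up (InvA n (ArcA n m M S0) - {(m,M)})" unfolding Fset_def by auto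
    ultimately show False using F by simp
  qed
  have uniq: "g = \<gamma>" if Pg: "join_irreducible n g \<and> \<not> contracts n (Theta_G n up) g \<and>
            has_left_reflection n g (transpose m M)" for g
  proof -
    have gp': "g \<in> perms n" and ex1: "\<exists>!x. covers n g x" using Pg unfolding join_irreducible_def by auto
    obtain i where i: "1 \<le> i" "i < n" "g i = M" "g (Suc i) = m"
      using has_refl_elim[OF gp' _ mM(2)] Pg by blast
    have P: "g permutes {1..n}" using gp' perms_iff by auto
    have inj: "g x = g y \<Longrightarrow> x = y" for x y using P by (metis permutes_inverses(2))
    have di: "g (Suc i) < g i" using i mM by simp
    note Di = desc_cover[OF gp' i(1,2) di]
    have mono: "g j < g (Suc j)" if j: "1 \<le> j" "j < n" "j \<noteq> i" for j
    proof (rule ccontr)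
      assume "\<not> g j < g (Suc j)"
      moreover have "g j \<noteq> g (Suc j)" using inj by (metis n_not_Suc_n)
      ultimately have dj: "g (Suc j) < g j" by simp
      note Dj = desc_cover[OF gp' j(1,2) dj]
      have "g \<circ> transpose j (Suc j) = g \<circ> transpose i (Suc i)" using ex1 Dj(4) Di(4) by blast
      then have "inv_set n g - {(g (Suc j), g j)} = inv_set n g - {(g (Suc i), g i)}" using Dj(2) Di(2) by simp
      then have "(g (Suc j), g j) = (g (Suc i), g i)" using Dj(3) Di(3) by blast
      then have "j = i" using inj by auto
      then show False using j by simp
    qed
    define A' where "A' = g ` {Suc i..n}"
    note R = runs_inv[OF gp' i(1,2) mono, folded A'_def]
    have gin: "g t \<in> {1..n}" if "t \<in> {1..n}" for t using perm_in[OF gp' that] .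
    have A'arc: "ArcA n m M A' = A'"
    proof
      show "ArcA n m M A' \<subseteq> A'"
      proof
        fix v assume v: "v \<in> ArcA n m M A'"
        show "v \<in> A'"
        proof (cases "M < v")
          case True
          then have vn: "v \<in> {1..n}" using v mM unfolding ArcA_def by auto
          show ?thesis
          proof (rule ccontr)
            assume nv: "v \<notin> A'"
            define t where "t = inv g v"
            have t: "g t = v" "t \<in> {1..n}" unfolding t_def using P vn
              by (simp add: permutes_inverses, metis permutes_in_image permutes_inv)
            have "t \<le> i" using t nv unfolding A'_def by (metis atLeastAtMost_iff image_eqI not_less_eq_eq)
            then have "v \<le> M" using R(2)[of t] t i by auto
            then show False using True by simp
          qed
        next
          case False
          then have "v = m \<or> v \<in> A'" using v unfolding ArcA_def by auto
          moreover have "m \<in> A'" unfolding A'_def using i(2) i(4)[symmetric] by auto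
          ultimately show ?thesis by auto
        qed
      qed
      show "A' \<subseteq> ArcA n m M A'"
      proof
        fix v assume v: "v \<in> A'"
        then obtain t where t: "v = g t" "Suc i \<le> t" "t \<le> n" unfolding A'_def by auto
        have "m \<le> v" using R(3)[of t] t i by auto
        moreover have "v \<noteq> M" using t i inj by (metis Suc_le_eq less_irrefl)
        moreover have "v \<le> n" using gin[of t] t by auto
        ultimately show "v \<in> ArcA n m M A'" unfolding ArcA_def using v by auto
      qed
    qed
    have Ig': "inv_set n g = InvA n (ArcA n m M A')" using R(1) A'arc by simp
    note Jg = ji_lemma[OF mM gp' Ig' i]
    have agree: "b \<in> A' \<longleftrightarrow> b \<in> S0" if b: "m < b" "b < M" for b
    proof (rule ccontr)
      assume "\<not> (b \<in> A' \<longleftrightarrow> b \<in> S0)"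
      then have wrong: "b \<in> A' \<longleftrightarrow> \<not> up b" unfolding S0_def by auto
      have inT: "(g, g \<circ> transpose i (Suc i)) \<in> \<Theta>" if G: "good_cong n up \<Theta>" for \<Theta>
      proof -
        have ac: "arc_contracted n \<Theta> m M A'" using wrong_arc[OF G mM(1) b(1) b(2) mM(3) wrong] .
        have "(m,M) \<notin> inv_set n (g \<circ> transpose i (Suc i))" using Jg(3) by simp
        moreover have "inv_set n g = insert (m,M) (inv_set n (g \<circ> transpose i (Suc i)))"
          using Jg(3) Ig' mM_InvA[OF mM] by auto
        moreover have "InvA n (ArcA n m M A') - {(m,M)} \<subseteq> inv_set n (g \<circ> transpose i (Suc i))"
          using Jg(3) by simp
        ultimately have "(g \<circ> transpose i (Suc i), g) \<in> \<Theta>"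
          using ac Jg(4) gp' unfolding arc_contracted_def by blast
        then show ?thesis using cong_sym G unfolding good_cong_def by blast
      qed
      have "(g, lower_cover n g) \<in> Theta_G n up"
        unfolding Theta_G_def Jg(2) using inT unfolding good_cong_def by blast
      then show False using Pg unfolding contracts_def by blast
    qed
    have "A' = A"
    proof -
      have "ArcA n m M A' = ArcA n m M S0" unfolding ArcA_def using agree by auto
      then show ?thesis using A'arc A_def by simp
    qed
    then have "inv_set n g = inv_set n \<gamma>" using R(1) GF(2) \<gamma>_def by simp
    then show "g = \<gamma>" using inv_set_inj gp' gp by blast
  qed
  have P\<gamma>: "join_irreducible n \<gamma> \<and> \<not> contracts n (Theta_G n up) \<gamma> \<and> has_left_reflection n \<gamma> (transpose m M)"
    using J(1) notc refl by blast
  have "\<exists>!g. join_irreducible n g \<and> \<not> contracts n (Theta_G n up) g \<and> has_left_reflection n g (transpose m M)"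
    using P\<gamma> uniq by blast
  moreover have "let A = {m} \<union> {b. m < b \<and> b < M \<and> up b} \<union> {b. M < b \<and> b \<le> n}
          in join_irreducible n (gamma_of n A) \<and> \<not> contracts n (Theta_G n up) (gamma_of n A) \<and>
             has_left_reflection n (gamma_of n A) (transpose m M)"
    unfolding Let_def Aeq using P\<gamma> \<gamma>_def by simp
  ultimately show ?thesis by blast
qed


end
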